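(* Under the standing assumptions below, every point $u\in\mathcal P_1$ is an accumulation point of $\mathcal P_1$.
   Context: Fix $\rho_1,\rho_2,\rho_3\in(0,1)$ with $\rho_1+\rho_2+\rho_3>1$ and $\rho_i+\rho_j\le1$ for all $i\ne j$; $\mu_i=1$, $\theta:=\rho_1+\rho_2+\rho_3-1$. $A_i^0:=\{y\in\mathbb R^3: y_1+y_2+y_3=1, y_i=0, y_l\ge0\}$, $A^0:=\bigcup_iA_i^0$; for $z\in A^0\setminus A_j^0$, $f_j(z):=\sum_{i\neq j}\frac{(1-\rho_j)z_i+\rho_i z_j}{(1-\rho_j)+\theta z_j}e_i$. For $(\hat i,\hat j,\hat k)$ equal to $(1,2,3)$ or a cyclic permutation, $(1-x)e_{\hat j}+xe_{\hat k}\in A^0_{\hat i}$ is written $(x,\hat i)$. $|z-z'|_1:=\|z-z'\|/\sqrt2$. Decision points $d_1,d_2,d_3\in(0,1)$ (identified with $(d_{\hat i},\hat i)$); switching rule $\mathfrak R((x,\hat i))=\hat j$ if $x<d_{\hat i}$, $\hat k$ if $x>d_{\hat i}$, both allowed if $x=d_{\hat i}$; $\varphi(z):=f_{\mathfrak R(z)}(z)$. A trajectory is $(z(t))$ with $z(t+1)\in\varphi(z(t))$; $z$ is a pre-image of $z'$ if some trajectory from $z$ has $z(t)=z'$ for some $t\ge1$. Standing assumption: $d_1$ has infinitely many distinct pre-images, while $d_2$ and $d_3$ have only finitely many. $\mathcal P_1$ is the set consisting of $d_1$ and all its pre-images. *)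

theory Defs
  imports "HOL-Analysis.Analysis"
begin

text \<open>Points of R^3 are vectors of type real^3; coordinate i is z $ i for i = 1,2,3
  (the index type 3 is cyclic, so i+1, i+2 realise the cyclic permutations).\<close>

definition theta :: "real^3 \<Rightarrow> real" where
  "theta \<rho> = \<rho>$1 + \<rho>$2 + \<rho>$3 - 1"

definition A0i :: "3 \<Rightarrow> (real^3) set" where
  "A0i i = {y. y$1 + y$2 + y$3 = 1 \<and> y$i = 0 \<and> (\<forall>l. y$l \<ge> 0)}"

definition A0 :: "(real^3) set" where
  "A0 = (\<Union>i. A0i i)"

definition fmap :: "real^3 \<Rightarrow> 3 \<Rightarrow> real^3 \<Rightarrow> real^3" where
  "fmap \<rho> j z = (\<chi> i. if i = j then 0
      else ((1 - \<rho>$j) * z$i + \<rho>$i * z$j) / ((1 - \<rho>$j) + theta \<rho> * z$j))"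

definition pt :: "real \<Rightarrow> 3 \<Rightarrow> real^3" where
  "pt x i = (1 - x) *\<^sub>R axis (i+1) 1 + x *\<^sub>R axis (i+2) 1"

text \<open>Switching rule (set-valued: both indices allowed at a decision point).\<close>
definition switch :: "real^3 \<Rightarrow> real^3 \<Rightarrow> 3 set" where
  "switch d z = {j. \<exists>x i. 0 \<le> x \<and> x \<le> 1 \<and> z = pt x i \<and>
       ((x \<le> d$i \<and> j = i+1) \<or> (x \<ge> d$i \<and> j = i+2))}"

definition phi :: "real^3 \<Rightarrow> real^3 \<Rightarrow> real^3 \<Rightarrow> (real^3) set" where
  "phi \<rho> d z = (if z \<in> A0 then {fmap \<rho> j z | j. j \<in> switch d z \<and> z \<notin> A0i j} else {})"

definition trajectory :: "real^3 \<Rightarrow> real^3 \<Rightarrow> (nat \<Rightarrow> real^3) \<Rightarrow> bool" where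
  "trajectory \<rho> d zs \<longleftrightarrow> (\<forall>t. zs (Suc t) \<in> phi \<rho> d (zs t))"

definition preimage :: "real^3 \<Rightarrow> real^3 \<Rightarrow> real^3 \<Rightarrow> real^3 \<Rightarrow> bool" where
  "preimage \<rho> d z z' \<longleftrightarrow>
     (\<exists>zs. trajectory \<rho> d zs \<and> zs 0 = z \<and> (\<exists>t\<ge>1. zs t = z'))"

definition preimages :: "real^3 \<Rightarrow> real^3 \<Rightarrow> real^3 \<Rightarrow> (real^3) set" where
  "preimages \<rho> d z' = {z. preimage \<rho> d z z'}"

definition P1 :: "real^3 \<Rightarrow> real^3 \<Rightarrow> (real^3) set" where
  "P1 \<rho> d = insert (pt (d$1) 1) (preimages \<rho> d (pt (d$1) 1))"

end

theory Submission imports Defs begin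


lemma gL_diff:
  fixes r a th x x' :: real
  assumes "a > 0" "th \<ge> 0" "x \<le> 1" "x' \<le> 1"
  shows "r*(1-x)/(a+th*(1-x)) - r*(1-x')/(a+th*(1-x')) = r*a*(x'-x)/((a+th*(1-x))*(a+th*(1-x')))"
proof -
  have p1: "a+th*(1-x) > 0" using assms by (simp add: add_pos_nonneg)
  have p2: "a+th*(1-x') > 0" using assms by (simp add: add_pos_nonneg)
  show ?thesis using p1 p2 by (simp add: field_simps)
qed

lemma gR_diff:
  fixes r b th x x' :: real
  assumes "b > 0" "th \<ge> 0" "x \<ge> 0" "x' \<ge> 0"
  shows "(b*(1-x)+(th-r+b)*x)/(b+th*x) - (b*(1-x')+(th-r+b)*x')/(b+th*x') = b*r*(x'-x)/((b+th*x)*(b+th*x'))"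
proof -
  have p1: "b+th*x > 0" using assms by (simp add: add_pos_nonneg)
  have p2: "b+th*x' > 0" using assms by (simp add: add_pos_nonneg)
  show ?thesis using p1 p2 by (simp add: field_simps)
qed

lemma ratio_bounds:
  fixes c P Q lo hi :: real
  assumes "c > 0" "P \<ge> lo" "Q \<ge> lo" "lo > 0" "P \<le> hi" "Q \<le> hi"
  shows "c/(P*Q) \<le> c/(lo*lo)" "c/(P*Q) \<ge> c/(hi*hi)" "c/(P*Q) > 0"
proof -
  have "lo*lo \<le> P*Q" using assms by (intro mult_mono) auto
  then show "c/(P*Q) \<le> c/(lo*lo)" using assms by (intro divide_left_mono) auto
  have "P*Q \<le> hi*hi" using assms by (intro mult_mono) auto
  then show "c/(P*Q) \<ge> c/(hi*hi)" using assms by (intro divide_left_mono) auto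
  show "c/(P*Q) > 0" using assms by simp
qed

lemma gL_mono:
  fixes r a th x x' :: real
  assumes "r > 0" "a > 0" "th \<ge> 0" "x \<le> x'" "x' \<le> 1"
  shows "r*(1-x')/(a+th*(1-x')) \<le> r*(1-x)/(a+th*(1-x))"
proof -
  have p1: "a+th*(1-x) > 0" using assms by (simp add: add_pos_nonneg)
  have p2: "a+th*(1-x') > 0" using assms by (simp add: add_pos_nonneg)
  have "r*(1-x)/(a+th*(1-x)) - r*(1-x')/(a+th*(1-x')) \<ge> 0"
    unfolding gL_diff[OF assms(2,3) order_trans[OF assms(4,5)] assms(5)]
    using p1 p2 assms by (intro divide_nonneg_pos mult_nonneg_nonneg) auto
  then show ?thesis by simp
qed

lemma gL_smono:
  fixes r a th x x' :: real
  assumes "r > 0" "a > 0" "th \<ge> 0" "x < x'" "x' \<le> 1"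
  shows "r*(1-x')/(a+th*(1-x')) < r*(1-x)/(a+th*(1-x))"
proof -
  have p1: "a+th*(1-x) > 0" using assms by (simp add: add_pos_nonneg)
  have p2: "a+th*(1-x') > 0" using assms by (simp add: add_pos_nonneg)
  have "r*(1-x)/(a+th*(1-x)) - r*(1-x')/(a+th*(1-x')) > 0"
    unfolding gL_diff[OF assms(2,3) order_trans[OF less_imp_le[OF assms(4)] assms(5)] assms(5)]
    using p1 p2 assms by (intro divide_pos_pos mult_pos_pos) auto
  then show ?thesis by simp
qed

lemma gR_mono:
  fixes r b th x x' :: real
  assumes "r > 0" "b > 0" "th \<ge> 0" "0 \<le> x" "x \<le> x'"
  shows "(b*(1-x')+(th-r+b)*x')/(b+th*x') \<le> (b*(1-x)+(th-r+b)*x)/(b+th*x)"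
proof -
  have p1: "b+th*x > 0" using assms by (simp add: add_pos_nonneg)
  have p2: "b+th*x' > 0" using assms by (simp add: add_pos_nonneg)
  have "(b*(1-x)+(th-r+b)*x)/(b+th*x) - (b*(1-x')+(th-r+b)*x')/(b+th*x') \<ge> 0"
    unfolding gR_diff[OF assms(2,3,4) order_trans[OF assms(4,5)]]
    using p1 p2 assms by (intro divide_nonneg_pos mult_nonneg_nonneg) auto
  then show ?thesis by simp
qed

lemma gR_smono:
  fixes r b th x x' :: real
  assumes "r > 0" "b > 0" "th \<ge> 0" "0 \<le> x" "x < x'"
  shows "(b*(1-x')+(th-r+b)*x')/(b+th*x') < (b*(1-x)+(th-r+b)*x)/(b+th*x)"
proof -
  have p1: "b+th*x > 0" using assms by (simp add: add_pos_nonneg)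
  have p2: "b+th*x' > 0" using assms by (simp add: add_pos_nonneg)
  have "(b*(1-x)+(th-r+b)*x)/(b+th*x) - (b*(1-x')+(th-r+b)*x')/(b+th*x') > 0"
    unfolding gR_diff[OF assms(2,3,4) order_trans[OF assms(4) less_imp_le[OF assms(5)]]]
    using p1 p2 assms by (intro divide_pos_pos mult_pos_pos) auto
  then show ?thesis by simp
qed

lemma gL_contr:
  fixes r a th x x' :: real
  assumes "r > 0" "a > 0" "th > 0" "r \<le> a" "x < 1" "x' < 1"
  shows "\<bar>r*(1-x)/(a+th*(1-x)) - r*(1-x')/(a+th*(1-x'))\<bar> \<le> \<bar>x - x'\<bar>"
    "x \<noteq> x' \<Longrightarrow> \<bar>r*(1-x)/(a+th*(1-x)) - r*(1-x')/(a+th*(1-x'))\<bar> < \<bar>x - x'\<bar>"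
proof -
  define D1 where "D1 = a+th*(1-x)"
  define D2 where "D2 = a+th*(1-x')"
  have D1: "D1 > a" unfolding D1_def using assms by simp
  have D2: "D2 > a" unfolding D2_def using assms by simp
  have eq: "\<bar>r*(1-x)/(a+th*(1-x)) - r*(1-x')/(a+th*(1-x'))\<bar> = (r*a/(D1*D2)) * \<bar>x - x'\<bar>"
    unfolding gL_diff[OF assms(2) less_imp_le[OF assms(3)] less_imp_le[OF assms(5)] less_imp_le[OF assms(6)]]
    using D1 D2 assms by (simp add: D1_def[symmetric] D2_def[symmetric] abs_mult abs_minus_commute)
  have "a*a < D1*D2" using D1 D2 assms by (intro mult_strict_mono) auto
  then have lt: "r*a/(D1*D2) < 1" using assms D1 D2
    by (simp add: divide_less_eq) (smt (verit) mult_right_mono)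
  show "\<bar>r*(1-x)/(a+th*(1-x)) - r*(1-x')/(a+th*(1-x'))\<bar> \<le> \<bar>x - x'\<bar>"
    unfolding eq using lt D1 D2 assms by (intro mult_left_le_one_le) auto
  assume "x \<noteq> x'"
  then have "(r*a/(D1*D2)) * \<bar>x - x'\<bar> < 1 * \<bar>x - x'\<bar>" using lt by (intro mult_strict_right_mono) auto
  then show "\<bar>r*(1-x)/(a+th*(1-x)) - r*(1-x')/(a+th*(1-x'))\<bar> < \<bar>x - x'\<bar>" unfolding eq by simp
qed

lemma gR_contr:
  fixes r b th x x' :: real
  assumes "r > 0" "b > 0" "th > 0" "r \<le> b" "x > 0" "x' > 0"
  shows "\<bar>(b*(1-x)+(th-r+b)*x)/(b+th*x) - (b*(1-x')+(th-r+b)*x')/(b+th*x')\<bar> \<le> \<bar>x - x'\<bar>"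
    "x \<noteq> x' \<Longrightarrow> \<bar>(b*(1-x)+(th-r+b)*x)/(b+th*x) - (b*(1-x')+(th-r+b)*x')/(b+th*x')\<bar> < \<bar>x - x'\<bar>"
proof -
  define D1 where "D1 = b+th*x"
  define D2 where "D2 = b+th*x'"
  have D1: "D1 > b" unfolding D1_def using assms by simp
  have D2: "D2 > b" unfolding D2_def using assms by simp
  have eq: "\<bar>(b*(1-x)+(th-r+b)*x)/(b+th*x) - (b*(1-x')+(th-r+b)*x')/(b+th*x')\<bar> = (b*r/(D1*D2)) * \<bar>x - x'\<bar>"
    unfolding gR_diff[OF assms(2) less_imp_le[OF assms(3)] less_imp_le[OF assms(5)] less_imp_le[OF assms(6)]]
    using D1 D2 assms by (simp add: D1_def[symmetric] D2_def[symmetric] abs_mult abs_minus_commute)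
  have "b*b < D1*D2" using D1 D2 assms by (intro mult_strict_mono) auto
  then have lt: "b*r/(D1*D2) < 1" using assms D1 D2
    by (simp add: divide_less_eq) (smt (verit) mult_left_mono)
  show "\<bar>(b*(1-x)+(th-r+b)*x)/(b+th*x) - (b*(1-x')+(th-r+b)*x')/(b+th*x')\<bar> \<le> \<bar>x - x'\<bar>"
    unfolding eq using lt D1 D2 assms by (intro mult_left_le_one_le) auto
  assume "x \<noteq> x'"
  then have "(b*r/(D1*D2)) * \<bar>x - x'\<bar> < 1 * \<bar>x - x'\<bar>" using lt by (intro mult_strict_right_mono) auto
  then show "\<bar>(b*(1-x)+(th-r+b)*x)/(b+th*x) - (b*(1-x')+(th-r+b)*x')/(b+th*x')\<bar> < \<bar>x - x'\<bar>" unfolding eq by simp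
qed

lemma inv_prod1: "A > 0 \<Longrightarrow> B > 0 \<Longrightarrow> (A/B)*(B/A) = (1::real)" by simp

lemma gL_invlip:
  fixes r a th x x' :: real
  assumes "r > 0" "a > 0" "th > 0" "0 \<le> x" "x \<le> 1" "0 \<le> x'" "x' \<le> 1"
  shows "\<bar>x - x'\<bar> \<le> ((a+th)*(a+th)/(r*a)) * \<bar>r*(1-x)/(a+th*(1-x)) - r*(1-x')/(a+th*(1-x'))\<bar>"
proof -
  define D1 where "D1 = a+th*(1-x)"
  define D2 where "D2 = a+th*(1-x')"
  have D1: "D1 \<ge> a" "D1 \<le> a+th" unfolding D1_def using assms by (auto simp: mult_le_cancel_left1)
  have D2: "D2 \<ge> a" "D2 \<le> a+th" unfolding D2_def using assms by (auto simp: mult_le_cancel_left1)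
  have eq: "\<bar>r*(1-x)/(a+th*(1-x)) - r*(1-x')/(a+th*(1-x'))\<bar> = (r*a/(D1*D2)) * \<bar>x - x'\<bar>"
    unfolding gL_diff[OF assms(2) less_imp_le[OF assms(3)] assms(5) assms(7)]
    using D1 D2 assms by (simp add: D1_def[symmetric] D2_def[symmetric] abs_mult abs_minus_commute)
  have lb: "r*a/(D1*D2) \<ge> r*a/((a+th)*(a+th))"
    using ratio_bounds(2)[where c="r*a" and P=D1 and Q=D2 and lo=a and hi="a+th"] D1 D2 assms by auto
  have pos: "r*a/((a+th)*(a+th)) > 0" using assms by simp
  have "((a+th)*(a+th)/(r*a)) * (r*a/(D1*D2)) \<ge> ((a+th)*(a+th)/(r*a)) * (r*a/((a+th)*(a+th)))"
    using lb assms by (intro mult_left_mono) auto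
  also have "((a+th)*(a+th)/(r*a)) * (r*a/((a+th)*(a+th))) = 1"
  proof -
    have "(a+th)*(a+th) > 0" "r*a > 0" using assms by auto
    then show ?thesis by (rule inv_prod1)
  qed
  finally have c1: "((a+th)*(a+th)/(r*a)) * (r*a/(D1*D2)) \<ge> 1" .
  have "1 * \<bar>x - x'\<bar> \<le> (((a+th)*(a+th)/(r*a)) * (r*a/(D1*D2))) * \<bar>x - x'\<bar>"
    using c1 by (intro mult_right_mono) auto
  then show ?thesis unfolding eq by (simp only: mult.assoc mult_1_left)
qed

lemma gR_invlip:
  fixes r b th x x' :: real
  assumes "r > 0" "b > 0" "th > 0" "0 \<le> x" "x \<le> 1" "0 \<le> x'" "x' \<le> 1"
  shows "\<bar>x - x'\<bar> \<le> ((b+th)*(b+th)/(b*r)) * \<bar>(b*(1-x)+(th-r+b)*x)/(b+th*x) - (b*(1-x')+(th-r+b)*x')/(b+th*x')\<bar>"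
proof -
  define D1 where "D1 = b+th*x"
  define D2 where "D2 = b+th*x'"
  have D1: "D1 \<ge> b" "D1 \<le> b+th" unfolding D1_def using assms by (auto simp: mult_le_cancel_left1)
  have D2: "D2 \<ge> b" "D2 \<le> b+th" unfolding D2_def using assms by (auto simp: mult_le_cancel_left1)
  have eq: "\<bar>(b*(1-x)+(th-r+b)*x)/(b+th*x) - (b*(1-x')+(th-r+b)*x')/(b+th*x')\<bar> = (b*r/(D1*D2)) * \<bar>x - x'\<bar>"
    unfolding gR_diff[OF assms(2) less_imp_le[OF assms(3)] assms(4) assms(6)]
    using D1 D2 assms by (simp add: D1_def[symmetric] D2_def[symmetric] abs_mult abs_minus_commute)
  have lb: "b*r/(D1*D2) \<ge> b*r/((b+th)*(b+th))"
    using ratio_bounds(2)[where c="b*r" and P=D1 and Q=D2 and lo=b and hi="b+th"] D1 D2 assms by auto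
  have "((b+th)*(b+th)/(b*r)) * (b*r/(D1*D2)) \<ge> ((b+th)*(b+th)/(b*r)) * (b*r/((b+th)*(b+th)))"
    using lb assms by (intro mult_left_mono) auto
  also have "((b+th)*(b+th)/(b*r)) * (b*r/((b+th)*(b+th))) = 1"
  proof -
    have "(b+th)*(b+th) > 0" "b*r > 0" using assms by auto
    then show ?thesis by (rule inv_prod1)
  qed
  finally have c1: "((b+th)*(b+th)/(b*r)) * (b*r/(D1*D2)) \<ge> 1" .
  have "1 * \<bar>x - x'\<bar> \<le> (((b+th)*(b+th)/(b*r)) * (b*r/(D1*D2))) * \<bar>x - x'\<bar>"
    using c1 by (intro mult_right_mono) auto
  then show ?thesis unfolding eq by (simp only: mult.assoc mult_1_left)
qed



lemma t3 [simp]: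
  fixes i :: 3
  shows "i+1 \<noteq> i" "i+2 \<noteq> i" "i+1 \<noteq> i+2" "i \<noteq> i+1" "i \<noteq> i+2" "i+2 \<noteq> i+1"
    "i+1+2 = i" "i+2+1 = i" "i+2+2 = i+1" "i+1+1 = i+2"
  using exhaust_3[of i] by (elim disjE; simp)+

lemma t3_cases: fixes i k :: 3 shows "k = i \<or> k = i+1 \<or> k = i+2"
  using exhaust_3[of i] exhaust_3[of k] by (elim disjE; simp)

lemma t3_shift: fixes i j :: 3 shows "(j = i+1) \<longleftrightarrow> (i = j+2)" "(j = i+2) \<longleftrightarrow> (i = j+1)"
  using exhaust_3[of i] exhaust_3[of j] by (elim disjE; simp)+

lemma num3: "(4::3) = 1" "(5::3) = 2" by simp_all

lemma sum3: fixes r :: "real^3" shows "r$i + r$(i+1) + r$(i+2) = r$1 + r$2 + r$3"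
  using exhaust_3[of i] by (elim disjE; simp add: num3)

definition FL :: "real^3 \<Rightarrow> 3 \<Rightarrow> real \<Rightarrow> real" where
  "FL \<rho> i x = \<rho>$i*(1-x)/(1-\<rho>$(i+1)+theta \<rho>*(1-x))"
definition FR :: "real^3 \<Rightarrow> 3 \<Rightarrow> real \<Rightarrow> real" where
  "FR \<rho> i x = ((1-\<rho>$(i+2))*(1-x)+\<rho>$(i+1)*x)/(1-\<rho>$(i+2)+theta \<rho>*x)"

definition stp :: "real^3 \<Rightarrow> real^3 \<Rightarrow> 3 \<Rightarrow> real \<Rightarrow> 3 \<Rightarrow> real \<Rightarrow> bool" where
  "stp \<rho> d i x j y \<longleftrightarrow> (j = i+1 \<and> 0 \<le> x \<and> x \<le> d$i \<and> y = FL \<rho> i x) \<or>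
                        (j = i+2 \<and> d$i \<le> x \<and> x \<le> 1 \<and> y = FR \<rho> i x)"

locale sys =
  fixes \<rho> d :: "real^3"
  assumes rho_pos: "\<And>i. 0 < \<rho>$i" and rho_lt1: "\<And>i. \<rho>$i < 1"
    and rho_sum: "\<rho>$1 + \<rho>$2 + \<rho>$3 > 1"
    and rho_pair: "\<And>i j. i \<noteq> j \<Longrightarrow> \<rho>$i + \<rho>$j \<le> 1"
    and d_pos: "\<And>i. 0 < d$i" and d_lt1: "\<And>i. d$i < 1"
begin

abbreviation "th \<equiv> theta \<rho>"

lemma th_pos: "th > 0" using rho_sum by (simp add: theta_def)
lemma th_i: "th = \<rho>$i + \<rho>$(i+1) + \<rho>$(i+2) - 1" using sum3[of \<rho> i] by (simp add: theta_def)

lemma FR_alt: "FR \<rho> i x = ((1-\<rho>$(i+2))*(1-x)+(th-\<rho>$i+(1-\<rho>$(i+2)))*x)/((1-\<rho>$(i+2))+th*x)"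
proof -
  have "\<rho>$(i+1) = th-\<rho>$i+(1-\<rho>$(i+2))" using th_i[of i] by simp
  then show ?thesis unfolding FR_def by simp
qed

lemma aL: "1 - \<rho>$(i+1) > 0" "\<rho>$i \<le> 1 - \<rho>$(i+1)" using rho_lt1[of "i+1"] rho_pair[of i "i+1"] by auto
lemma aR: "1 - \<rho>$(i+2) > 0" "\<rho>$i \<le> 1 - \<rho>$(i+2)" using rho_lt1[of "i+2"] rho_pair[of i "i+2"] by auto

lemma FL_mono: "x \<le> x' \<Longrightarrow> x' \<le> 1 \<Longrightarrow> FL \<rho> i x' \<le> FL \<rho> i x"
  unfolding FL_def using gL_mono[OF rho_pos aL(1) less_imp_le[OF th_pos]] by blast
lemma FL_smono: "x < x' \<Longrightarrow> x' \<le> 1 \<Longrightarrow> FL \<rho> i x' < FL \<rho> i x"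
  unfolding FL_def using gL_smono[OF rho_pos aL(1) less_imp_le[OF th_pos]] by blast
lemma FR_mono: "0 \<le> x \<Longrightarrow> x \<le> x' \<Longrightarrow> FR \<rho> i x' \<le> FR \<rho> i x"
  unfolding FR_alt using gR_mono[OF rho_pos aR(1) less_imp_le[OF th_pos]] by blast
lemma FR_smono: "0 \<le> x \<Longrightarrow> x < x' \<Longrightarrow> FR \<rho> i x' < FR \<rho> i x"
  unfolding FR_alt using gR_smono[OF rho_pos aR(1) less_imp_le[OF th_pos]] by blast

lemma FL_contr: "x < 1 \<Longrightarrow> x' < 1 \<Longrightarrow> \<bar>FL \<rho> i x - FL \<rho> i x'\<bar> \<le> \<bar>x - x'\<bar>"
  "x < 1 \<Longrightarrow> x' < 1 \<Longrightarrow> x \<noteq> x' \<Longrightarrow> \<bar>FL \<rho> i x - FL \<rho> i x'\<bar> < \<bar>x - x'\<bar>"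
  unfolding FL_def using gL_contr[OF rho_pos aL(1) th_pos aL(2)] by blast+
lemma FR_contr: "0 < x \<Longrightarrow> 0 < x' \<Longrightarrow> \<bar>FR \<rho> i x - FR \<rho> i x'\<bar> \<le> \<bar>x - x'\<bar>"
  "0 < x \<Longrightarrow> 0 < x' \<Longrightarrow> x \<noteq> x' \<Longrightarrow> \<bar>FR \<rho> i x - FR \<rho> i x'\<bar> < \<bar>x - x'\<bar>"
  unfolding FR_alt using gR_contr[OF rho_pos aR(1) th_pos aR(2)] by blast+

definition KL where "KL i = ((1 - \<rho>$(i+1))+th)*((1 - \<rho>$(i+1))+th)/(\<rho>$i*(1 - \<rho>$(i+1)))"
definition KR where "KR i = ((1 - \<rho>$(i+2))+th)*((1 - \<rho>$(i+2))+th)/((1 - \<rho>$(i+2))*\<rho>$i)"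
definition K where "K = (\<Sum>i\<in>UNIV. KL i + KR i)"

lemma KL_pos: "KL i > 0" unfolding KL_def using aL(1)[of i] rho_pos[of i] th_pos by auto
lemma KR_pos: "KR i > 0" unfolding KR_def using aR(1)[of i] rho_pos[of i] th_pos by auto
lemma K_ge: "KL i \<le> K" "KR i \<le> K"
proof -
  have "KL i + KR i \<le> K" unfolding K_def
    by (rule member_le_sum) (auto intro: add_nonneg_nonneg less_imp_le KL_pos KR_pos)
  then show "KL i \<le> K" "KR i \<le> K" using KL_pos[of i] KR_pos[of i] by auto
qed
lemma K_pos: "K > 0" using K_ge(1)[of 1] KL_pos[of 1] by auto

lemma FL_invlip: "0 \<le> x \<Longrightarrow> x \<le> 1 \<Longrightarrow> 0 \<le> x' \<Longrightarrow> x' \<le> 1 \<Longrightarrow> \<bar>x - x'\<bar> \<le> K * \<bar>FL \<rho> i x - FL \<rho> i x'\<bar>"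
proof -
  assume a: "0 \<le> x" "x \<le> 1" "0 \<le> x'" "x' \<le> 1"
  have "\<bar>x - x'\<bar> \<le> KL i * \<bar>FL \<rho> i x - FL \<rho> i x'\<bar>"
    unfolding FL_def KL_def using gL_invlip[OF rho_pos aL(1) th_pos a] by blast
  also have "\<dots> \<le> K * \<bar>FL \<rho> i x - FL \<rho> i x'\<bar>" using K_ge by (intro mult_right_mono) auto
  finally show ?thesis .
qed

lemma FR_invlip: "0 \<le> x \<Longrightarrow> x \<le> 1 \<Longrightarrow> 0 \<le> x' \<Longrightarrow> x' \<le> 1 \<Longrightarrow> \<bar>x - x'\<bar> \<le> K * \<bar>FR \<rho> i x - FR \<rho> i x'\<bar>"
proof -
  assume a: "0 \<le> x" "x \<le> 1" "0 \<le> x'" "x' \<le> 1"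
  have "\<bar>x - x'\<bar> \<le> KR i * \<bar>FR \<rho> i x - FR \<rho> i x'\<bar>"
    unfolding FR_alt KR_def using gR_invlip[OF rho_pos aR(1) th_pos a] by blast
  also have "\<dots> \<le> K * \<bar>FR \<rho> i x - FR \<rho> i x'\<bar>" using K_ge by (intro mult_right_mono) auto
  finally show ?thesis .
qed

lemma FL_pos: "x < 1 \<Longrightarrow> FL \<rho> i x > 0"
proof -
  assume "x < 1"
  then have "1-\<rho>$(i+1)+th*(1-x) > 0" using aL(1)[of i] th_pos by (simp add: add_pos_nonneg)
  then show ?thesis unfolding FL_def using rho_pos[of i] \<open>x<1\<close> by simp
qed

lemma FL0_lt1: "FL \<rho> i 0 < 1"
proof -
  have "1-\<rho>$(i+1)+th > 0" using aL(1)[of i] th_pos by simp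
  moreover have "\<rho>$i < 1-\<rho>$(i+1)+th" using aL(2)[of i] th_pos by simp
  ultimately show ?thesis unfolding FL_def by simp
qed

lemma FR_lt1: "0 < x \<Longrightarrow> FR \<rho> i x < 1"
proof -
  assume "0 < x"
  have pos: "1-\<rho>$(i+2)+th*x > 0" using aR(1)[of i] th_pos \<open>0<x\<close> by (simp add: add_pos_pos)
  have xr: "x*\<rho>$i > 0" using rho_pos[of i] \<open>0<x\<close> by simp
  have e: "\<rho>$(i+1) = 1 + th - \<rho>$i - \<rho>$(i+2)" using th_i[of i] by linarith
  have "(1-\<rho>$(i+2))*(1-x)+\<rho>$(i+1)*x = 1-\<rho>$(i+2)+th*x - x*\<rho>$i"
    by (subst e) (simp add: algebra_simps)
  then have "(1-\<rho>$(i+2))*(1-x)+\<rho>$(i+1)*x < 1-\<rho>$(i+2)+th*x" using xr by linarith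
  then show ?thesis unfolding FR_def using pos by simp
qed

lemma FR1_pos: "FR \<rho> i 1 > 0"
proof -
  have "1-\<rho>$(i+2)+th > 0" using aR(1)[of i] th_pos by simp
  then show ?thesis unfolding FR_def using rho_pos[of "i+1"] by simp
qed

lemma vert: "FL \<rho> (j+2) 0 = FR \<rho> (j+1) 1"
  unfolding FL_def FR_def by simp

lemma FL_cont: "x \<le> 1 \<Longrightarrow> isCont (FL \<rho> i) x"
proof -
  assume "x \<le> 1"
  then have "1-\<rho>$(i+1)+th*(1-x) \<noteq> 0" using aL(1)[of i] th_pos
    by (smt (verit) mult_nonneg_nonneg)
  then show ?thesis unfolding FL_def[abs_def] by (intro continuous_intros) auto
qed

lemma FR_cont: "0 \<le> x \<Longrightarrow> isCont (FR \<rho> i) x"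
proof -
  assume "0 \<le> x"
  then have "1-\<rho>$(i+2)+th*x \<noteq> 0" using aR(1)[of i] th_pos
    by (smt (verit) mult_nonneg_nonneg)
  then show ?thesis unfolding FR_def[abs_def] by (intro continuous_intros) auto
qed

end


definition betw :: "real \<Rightarrow> real \<Rightarrow> real \<Rightarrow> bool" where
  "betw a b z \<longleftrightarrow> min a b \<le> z \<and> z \<le> max a b"

lemma tendsto_bound:
  fixes xs ys :: "nat \<Rightarrow> real"
  assumes "\<forall>\<^sub>F n in sequentially. \<bar>xs n - a\<bar> \<le> C * \<bar>ys n - b\<bar>" "ys \<longlonglongrightarrow> b"
  shows "xs \<longlonglongrightarrow> a"
proof -
  have "(\<lambda>n. ys n - b) \<longlonglongrightarrow> 0" using assms(2) by (rule LIM_zero)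
  then have "(\<lambda>n. \<bar>ys n - b\<bar>) \<longlonglongrightarrow> 0" by (rule tendsto_rabs_zero)
  then have l: "(\<lambda>n. C * \<bar>ys n - b\<bar>) \<longlonglongrightarrow> 0" by (rule tendsto_mult_right_zero)
  have e: "\<forall>\<^sub>F n in sequentially. norm (xs n - a) \<le> C * \<bar>ys n - b\<bar>" using assms(1) by simp
  have "(\<lambda>n. xs n - a) \<longlonglongrightarrow> 0" by (rule Lim_null_comparison[OF e l])
  then show ?thesis by (rule LIM_zero_cancel)
qed

context sys begin

abbreviation "st \<equiv> stp \<rho> d"
abbreviation "vv j \<equiv> FL \<rho> (j+2) 0"

definition lam where "lam i = min (min (FL \<rho> i (d$i)) (1 - FL \<rho> i 0)) (min (FR \<rho> i 1) (1 - FR \<rho> i (d$i)))"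
definition Lam where "Lam = Min (range lam)"

lemma lam_pos: "lam i > 0"
  unfolding lam_def using FL_pos[of "d$i" i] d_lt1[of i] FL0_lt1[of i] FR1_pos[of i] FR_lt1[of "d$i" i] d_pos[of i]
  by auto

lemma Lam_pos: "Lam > 0" unfolding Lam_def using lam_pos by (subst Min_gr_iff) auto
lemma Lam_le: "Lam \<le> lam i" unfolding Lam_def by (rule Min_le) auto

lemma stp_margin: "st i x j y \<Longrightarrow> Lam \<le> y \<and> y \<le> 1 - Lam"
proof -
  assume s: "st i x j y"
  have L: "Lam \<le> FL \<rho> i (d$i)" "Lam \<le> 1 - FL \<rho> i 0" "Lam \<le> FR \<rho> i 1" "Lam \<le> 1 - FR \<rho> i (d$i)"
    using Lam_le[of i] unfolding lam_def by auto
  from s show ?thesis unfolding stp_def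
  proof (elim disjE conjE)
    assume "0 \<le> x" "x \<le> d$i" "y = FL \<rho> i x"
    moreover have "FL \<rho> i (d$i) \<le> FL \<rho> i x" using FL_mono[of x "d$i" i] \<open>x \<le> d$i\<close> d_lt1[of i] by linarith
    moreover have "FL \<rho> i x \<le> FL \<rho> i 0" using FL_mono[of 0 x i] \<open>0 \<le> x\<close> \<open>x \<le> d$i\<close> d_lt1[of i] by linarith
    ultimately show ?thesis using L by auto
  next
    assume "d$i \<le> x" "x \<le> 1" "y = FR \<rho> i x"
    moreover have "FR \<rho> i x \<le> FR \<rho> i (d$i)" using FR_mono[of "d$i" x i] \<open>d$i \<le> x\<close> d_pos[of i] by linarith
    moreover have "FR \<rho> i 1 \<le> FR \<rho> i x" using FR_mono[of x 1 i] \<open>x \<le> 1\<close> \<open>d$i \<le> x\<close> d_pos[of i] by linarith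
    ultimately show ?thesis using L by auto
  qed
qed

lemma stp_int: "st i x j y \<Longrightarrow> 0 < y \<and> y < 1"
  using stp_margin Lam_pos by fastforce

lemma stp_dom: "st i x j y \<Longrightarrow> 0 \<le> x \<and> x \<le> 1"
  unfolding stp_def using d_lt1[of i] d_pos[of i] by auto

lemma stp_vert: "st i x j y \<Longrightarrow>
   (i = j+2 \<and> y \<le> vv j \<and> (y = vv j \<longrightarrow> x = 0)) \<or> (i = j+1 \<and> vv j \<le> y \<and> (y = vv j \<longrightarrow> x = 1))"
proof -
  assume s: "st i x j y"
  from s show ?thesis unfolding stp_def
  proof (elim disjE conjE)
    assume a: "j = i+1" "0 \<le> x" "x \<le> d$i" "y = FL \<rho> i x"
    then have i: "i = j+2" by simp
    have "y \<le> vv j" using a(2-4) i FL_mono[of 0 x i] d_lt1[of i] by simp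
    moreover have "y = vv j \<longrightarrow> x = 0"
    proof
      assume "y = vv j"
      show "x = 0"
      proof (rule ccontr)
        assume "x \<noteq> 0"
        then have "0 < x" using a by simp
        then have "FL \<rho> i x < FL \<rho> i 0" using FL_smono[of 0 x i] a d_lt1[of i] by simp
        then show False using \<open>y = vv j\<close> a(4) i by simp
      qed
    qed
    ultimately show ?thesis using i by auto
  next
    assume a: "j = i+2" "d$i \<le> x" "x \<le> 1" "y = FR \<rho> i x"
    then have i: "i = j+1" by simp
    have v: "vv j = FR \<rho> i 1" using vert i by simp
    have "vv j \<le> y" using a(2-4) v FR_mono[of x 1 i] d_pos[of i] by simp
    moreover have "y = vv j \<longrightarrow> x = 1"
    proof
      assume "y = vv j"
      show "x = 1"
      proof (rule ccontr)
        assume "x \<noteq> 1"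
        then have "x < 1" using a by simp
        then have "FR \<rho> i 1 < FR \<rho> i x" using FR_smono[of x 1 i] a d_pos[of i] by simp
        then show False using \<open>y = vv j\<close> a(4) v by simp
      qed
    qed
    ultimately show ?thesis using i by auto
  qed
qed

lemma stp_same_branch: "st i x j y \<Longrightarrow> st i x' j y' \<Longrightarrow>
   (j = i+1 \<and> 0 \<le> x \<and> x \<le> d$i \<and> y = FL \<rho> i x \<and> 0 \<le> x' \<and> x' \<le> d$i \<and> y' = FL \<rho> i x') \<or>
   (j = i+2 \<and> d$i \<le> x \<and> x \<le> 1 \<and> y = FR \<rho> i x \<and> d$i \<le> x' \<and> x' \<le> 1 \<and> y' = FR \<rho> i x')"
  unfolding stp_def by auto

lemma stp_bu: "st i x j y \<Longrightarrow> st i' x' j y \<Longrightarrow>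
   (i = i' \<and> x = x') \<or> (i = j+2 \<and> x = 0 \<and> i' = j+1 \<and> x' = 1) \<or> (i = j+1 \<and> x = 1 \<and> i' = j+2 \<and> x' = 0)"
proof -
  assume s1: "st i x j y" and s2: "st i' x' j y"
  show ?thesis
  proof (cases "i = i'")
    case True
    then have "st i x' j y" using s2 by simp
    from stp_same_branch[OF s1 this] have "x = x'"
    proof (elim disjE conjE)
      assume "x \<le> d$i" "x' \<le> d$i" "y = FL \<rho> i x" "y = FL \<rho> i x'"
      then show "x = x'" using FL_smono[of x x' i] FL_smono[of x' x i] d_lt1[of i]
        by (cases x x' rule: linorder_cases) auto
    next
      assume "d$i \<le> x" "d$i \<le> x'" "y = FR \<rho> i x" "y = FR \<rho> i x'"
      then show "x = x'" using FR_smono[of x x' i] FR_smono[of x' x i] d_pos[of i]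
        by (cases x x' rule: linorder_cases) auto
    qed
    then show ?thesis using True by simp
  next
    case False
    from stp_vert[OF s1] stp_vert[OF s2] False show ?thesis by auto
  qed
qed

lemma stp_bu_int: "st i x j y \<Longrightarrow> st i' x' j y \<Longrightarrow> 0 < x \<Longrightarrow> x < 1 \<Longrightarrow> i = i' \<and> x = x'"
  using stp_bu by fastforce

lemma stp_det: "st i x j y \<Longrightarrow> st i x j' y' \<Longrightarrow> x \<noteq> d$i \<Longrightarrow> j = j' \<and> y = y'"
  unfolding stp_def by auto

lemma stp_contr: "st i x j y \<Longrightarrow> st i x' j y' \<Longrightarrow> \<bar>y - y'\<bar> \<le> \<bar>x - x'\<bar> \<and> (x \<noteq> x' \<longrightarrow> \<bar>y - y'\<bar> < \<bar>x - x'\<bar>)"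
proof -
  assume s1: "st i x j y" and s2: "st i x' j y'"
  from stp_same_branch[OF s1 s2] show ?thesis
  proof (elim disjE conjE)
    assume "x \<le> d$i" "x' \<le> d$i" "y = FL \<rho> i x" "y' = FL \<rho> i x'"
    then show ?thesis using FL_contr[of x x' i] d_lt1[of i] by auto
  next
    assume "d$i \<le> x" "d$i \<le> x'" "y = FR \<rho> i x" "y' = FR \<rho> i x'"
    then show ?thesis using FR_contr[of x x' i] d_pos[of i] by auto
  qed
qed

lemma stp_invlip: "st i x j y \<Longrightarrow> st i x' j y' \<Longrightarrow> \<bar>x - x'\<bar> \<le> K * \<bar>y - y'\<bar>"
proof -
  assume s1: "st i x j y" and s2: "st i x' j y'"
  from stp_same_branch[OF s1 s2] show ?thesis
  proof (elim disjE conjE)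
    assume "0 \<le> x" "0 \<le> x'" "x \<le> d$i" "x' \<le> d$i" "y = FL \<rho> i x" "y' = FL \<rho> i x'"
    then show ?thesis using FL_invlip[of x x' i] d_lt1[of i] by auto
  next
    assume "x \<le> 1" "x' \<le> 1" "d$i \<le> x" "d$i \<le> x'" "y = FR \<rho> i x" "y' = FR \<rho> i x'"
    then show ?thesis using FR_invlip[of x x' i] d_pos[of i] by auto
  qed
qed

lemma stp_betw: "st i a j ya \<Longrightarrow> st i b j yb \<Longrightarrow> betw a b z \<Longrightarrow> \<exists>yz. st i z j yz \<and> betw ya yb yz"
proof -
  assume s1: "st i a j ya" and s2: "st i b j yb" and z: "betw a b z"
  from stp_same_branch[OF s1 s2] show ?thesis
  proof (elim disjE conjE)
    assume h: "j = i+1" "0 \<le> a" "0 \<le> b" "a \<le> d$i" "b \<le> d$i" "ya = FL \<rho> i a" "yb = FL \<rho> i b"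
    have zr: "0 \<le> z" "z \<le> d$i" using z h unfolding betw_def by auto
    have "st i z j (FL \<rho> i z)" unfolding stp_def using h zr by auto
    moreover have "betw ya yb (FL \<rho> i z)"
    proof (cases "a \<le> b")
      case True
      then have "a \<le> z" "z \<le> b" using z unfolding betw_def by auto
      then have "FL \<rho> i b \<le> FL \<rho> i z" "FL \<rho> i z \<le> FL \<rho> i a"
        using FL_mono[of z b i] FL_mono[of a z i] h d_lt1[of i] by auto
      then show ?thesis using h unfolding betw_def by auto
    next
      case False
      then have "b \<le> z" "z \<le> a" using z unfolding betw_def by auto
      then have "FL \<rho> i a \<le> FL \<rho> i z" "FL \<rho> i z \<le> FL \<rho> i b"
        using FL_mono[of z a i] FL_mono[of b z i] h d_lt1[of i] by auto
      then show ?thesis using h unfolding betw_def by auto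
    qed
    ultimately show ?thesis by blast
  next
    assume h: "j = i+2" "a \<le> 1" "b \<le> 1" "d$i \<le> a" "d$i \<le> b" "ya = FR \<rho> i a" "yb = FR \<rho> i b"
    have zr: "d$i \<le> z" "z \<le> 1" using z h unfolding betw_def by auto
    have "st i z j (FR \<rho> i z)" unfolding stp_def using h zr by auto
    moreover have "betw ya yb (FR \<rho> i z)"
    proof (cases "a \<le> b")
      case True
      then have "a \<le> z" "z \<le> b" using z unfolding betw_def by auto
      then have "FR \<rho> i b \<le> FR \<rho> i z" "FR \<rho> i z \<le> FR \<rho> i a"
        using FR_mono[of z b i] FR_mono[of a z i] h d_pos[of i] by auto
      then show ?thesis using h unfolding betw_def by auto
    next
      case False
      then have "b \<le> z" "z \<le> a" using z unfolding betw_def by auto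
      then have "FR \<rho> i a \<le> FR \<rho> i z" "FR \<rho> i z \<le> FR \<rho> i b"
        using FR_mono[of z a i] FR_mono[of b z i] h d_pos[of i] by auto
      then show ?thesis using h unfolding betw_def by auto
    qed
    ultimately show ?thesis by blast
  qed
qed

lemma stp_closed:
  assumes ev: "\<forall>\<^sub>F n in sequentially. st i (xs n) j (ys n)" and xa: "xs \<longlonglongrightarrow> a" and yb: "ys \<longlonglongrightarrow> b"
  shows "st i a j b"
proof -
  consider "j = i+1" | "j = i+2" | "j \<noteq> i+1 \<and> j \<noteq> i+2" by blast
  then show ?thesis
  proof cases
    case 1
    then have ev2: "\<forall>\<^sub>F n in sequentially. 0 \<le> xs n \<and> xs n \<le> d$i \<and> ys n = FL \<rho> i (xs n)"
      using ev unfolding stp_def by (auto elim: eventually_mono)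
    have a0: "0 \<le> a" using ev2 xa by (intro tendsto_lowerbound[of xs]) (auto elim: eventually_mono)
    have ad: "a \<le> d$i" using ev2 xa by (intro tendsto_upperbound[of xs]) (auto elim: eventually_mono)
    have "(\<lambda>n. FL \<rho> i (xs n)) \<longlonglongrightarrow> FL \<rho> i a"
      using isCont_tendsto_compose[OF FL_cont xa] ad d_lt1[of i] by auto
    moreover have "(\<lambda>n. FL \<rho> i (xs n)) \<longlonglongrightarrow> b"
      using yb ev2 by (rule Lim_transform_eventually[OF _ eventually_mono]) auto
    ultimately have "b = FL \<rho> i a" using LIMSEQ_unique by blast
    then show ?thesis unfolding stp_def using 1 a0 ad by auto
  next
    case 2
    then have ev2: "\<forall>\<^sub>F n in sequentially. d$i \<le> xs n \<and> xs n \<le> 1 \<and> ys n = FR \<rho> i (xs n)"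
      using ev unfolding stp_def by (auto elim: eventually_mono)
    have a0: "d$i \<le> a" using ev2 xa by (intro tendsto_lowerbound[of xs]) (auto elim: eventually_mono)
    have ad: "a \<le> 1" using ev2 xa by (intro tendsto_upperbound[of xs]) (auto elim: eventually_mono)
    have "(\<lambda>n. FR \<rho> i (xs n)) \<longlonglongrightarrow> FR \<rho> i a"
      using isCont_tendsto_compose[OF FR_cont xa] a0 d_pos[of i] by auto
    moreover have "(\<lambda>n. FR \<rho> i (xs n)) \<longlonglongrightarrow> b"
      using yb ev2 by (rule Lim_transform_eventually[OF _ eventually_mono]) auto
    ultimately have "b = FR \<rho> i a" using LIMSEQ_unique by blast
    then show ?thesis unfolding stp_def using 2 a0 ad by auto
  next
    case 3
    then have "\<forall>\<^sub>F n in sequentially. False" using ev unfolding stp_def by (auto elim: eventually_mono)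
    then show ?thesis by simp
  qed
qed

lemma stp_limit_pre:
  assumes ev: "\<forall>\<^sub>F n in sequentially. st i (xs n) j (ys n)" and yp: "ys \<longlonglongrightarrow> p"
  shows "\<exists>a. xs \<longlonglongrightarrow> a \<and> st i a j p"
proof -
  obtain N0 where N0: "\<And>n. n \<ge> N0 \<Longrightarrow> st i (xs n) j (ys n)" using ev unfolding eventually_sequentially by blast
  have cy: "Cauchy ys" using yp by (rule LIMSEQ_imp_Cauchy)
  have "Cauchy xs"
  proof (rule metric_CauchyI)
    fix e :: real assume e: "e > 0"
    then have "e / K > 0" using K_pos by simp
    then obtain M where M: "\<And>m n. m \<ge> M \<Longrightarrow> n \<ge> M \<Longrightarrow> dist (ys m) (ys n) < e / K"
      using cy unfolding Cauchy_def by blast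
    show "\<exists>M. \<forall>m\<ge>M. \<forall>n\<ge>M. dist (xs m) (xs n) < e"
    proof (intro exI allI impI)
      fix m n assume mn: "max M N0 \<le> m" "max M N0 \<le> n"
      have "\<bar>xs m - xs n\<bar> \<le> K * \<bar>ys m - ys n\<bar>" using mn by (intro stp_invlip[OF N0 N0]) auto
      also have "\<dots> < K * (e / K)" using M[of m n] mn K_pos by (intro mult_strict_left_mono) (auto simp: dist_real_def)
      also have "\<dots> = e" using K_pos by simp
      finally show "dist (xs m) (xs n) < e" by (simp add: dist_real_def)
    qed
  qed
  then obtain a where xa: "xs \<longlonglongrightarrow> a" using Cauchy_convergent_iff convergent_def by blast
  have "st i a j p" using stp_closed[OF ev xa yp] .
  then show ?thesis using xa by blast
qed

end


lemma betw_flip: "betw 0 A z \<Longrightarrow> (z \<ge> 0 \<longrightarrow> w \<le> 0) \<Longrightarrow> (z \<le> 0 \<longrightarrow> w \<ge> 0) \<Longrightarrow> \<bar>w\<bar> \<le> \<bar>z\<bar> \<Longrightarrow> betw 0 (-A) (w::real)"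
  unfolding betw_def by (cases "A \<ge> 0"; cases "z \<ge> 0"; cases "w \<ge> 0") (auto simp: min_def max_def)

lemma betw_shift: "betw 0 (a - c) (b - c) \<Longrightarrow> betw c a (b::real)"
  unfolding betw_def by (auto simp: min_def max_def split: if_splits)

lemma betw_trans: "betw c a b \<Longrightarrow> betw c b z \<Longrightarrow> betw c a (z::real)"
  unfolding betw_def by (auto simp: min_def max_def split: if_splits)

lemma betw_refl: "betw c a a" unfolding betw_def by auto

lemma betw_dist: "betw c a z \<Longrightarrow> \<bar>z - c\<bar> \<le> \<bar>a - c\<bar>"
  unfolding betw_def by (auto simp: min_def max_def split: if_splits)

context sys begin

lemma stp_anti: "st i x j y \<Longrightarrow> st i x' j y' \<Longrightarrow> x \<le> x' \<Longrightarrow> y' \<le> y"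
proof -
  assume s1: "st i x j y" and s2: "st i x' j y'" and le: "x \<le> x'"
  from stp_same_branch[OF s1 s2] show ?thesis
  proof (elim disjE conjE)
    assume "x' \<le> d$i" "y = FL \<rho> i x" "y' = FL \<rho> i x'"
    then show ?thesis using FL_mono[of x x' i] le d_lt1[of i] by simp
  next
    assume "d$i \<le> x" "y = FR \<rho> i x" "y' = FR \<rho> i x'"
    then show ?thesis using FR_mono[of x x' i] le d_pos[of i] by simp
  qed
qed

lemma stp_vpt: "st (e+2) 0 e (vv e)" "st (e+1) 1 e (vv e)"
  unfolding stp_def using d_pos[of "e+2"] d_lt1[of "e+1"] vert[of e] by auto

end

locale chn = sys +
  fixes E :: "nat \<Rightarrow> 3" and X :: "nat \<Rightarrow> real"
  assumes E0: "E 0 = 1" and X0: "X 0 = d$1"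
    and ch: "\<And>t. st (E (Suc t)) (X (Suc t)) (E t) (X t)"
    and injEX: "inj (\<lambda>t. (E t, X t))"
    and FB: "\<And>i e p. i \<noteq> 1 \<Longrightarrow> e 0 = i \<Longrightarrow> p 0 = d$i \<Longrightarrow>
               (\<forall>k. st (e (Suc k)) (p (Suc k)) (e k) (p k)) \<Longrightarrow> finite (range (\<lambda>k. (e k, p k)))"
begin

definition acc where "acc t \<longleftrightarrow> (\<forall>\<epsilon>>0. \<exists>s. s \<noteq> t \<and> E s = E t \<and> \<bar>X s - X t\<bar> < \<epsilon>)"

lemma Xint: "0 < X t \<and> X t < 1" using stp_int[OF ch[of t]] .

lemma Xmargin: "Lam \<le> X t \<and> X t \<le> 1 - Lam" using stp_margin[OF ch[of t]] .

lemma EX_eq: "E s = E t \<Longrightarrow> X s = X t \<Longrightarrow> s = t"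
  using injEX unfolding inj_def by auto

lemma nd: "t \<ge> 1 \<Longrightarrow> X t \<noteq> d$(E t)"
proof
  assume t: "t \<ge> 1" and eq: "X t = d$(E t)"
  show False
  proof (cases "E t = 1")
    case True
    then have "t = 0" using EX_eq[of t 0] eq E0 X0 by simp
    then show False using t by simp
  next
    case False
    have "finite (range (\<lambda>k. (E (t+k), X (t+k))))"
      by (rule FB[OF False]) (use eq ch in auto)
    moreover have "inj (\<lambda>k. (E (t+k), X (t+k)))"
    proof (rule injI)
      fix x y assume "(E (t+x), X (t+x)) = (E (t+y), X (t+y))"
      then have "t + x = t + y" using EX_eq[of "t+x" "t+y"] by simp
      then show "x = y" by simp
    qed
    ultimately show False using finite_imageD by (metis infinite_UNIV_nat)
  qed
qed

lemma prop_acc: "acc t \<Longrightarrow> acc (Suc t)"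
proof -
  assume a: "acc t"
  have s0: "st (E (Suc t)) (X (Suc t)) (E t) (X t)" by (rule ch)
  have xi: "0 < X (Suc t)" "X (Suc t) < 1" using Xint by auto
  have yv: "X t \<noteq> vv (E t)" using stp_vert[OF s0] xi by auto
  define g where "g = \<bar>X t - vv (E t)\<bar>"
  have g: "g > 0" using yv unfolding g_def by simp
  show "acc (Suc t)" unfolding acc_def
  proof (intro allI impI)
    fix \<epsilon> :: real assume e: "\<epsilon> > 0"
    then have "min (\<epsilon>/K) g > 0" using g K_pos by simp
    then obtain s where s: "s \<noteq> t" "E s = E t" "\<bar>X s - X t\<bar> < min (\<epsilon>/K) g"
      using a unfolding acc_def by blast
    have s1: "st (E (Suc s)) (X (Suc s)) (E t) (X s)" using ch[of s] s(2) by simp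
    have same: "E (Suc s) = E (Suc t)"
    proof (rule ccontr)
      assume ne: "E (Suc s) \<noteq> E (Suc t)"
      from stp_vert[OF s0] stp_vert[OF s1] ne
      have "(X t \<le> vv (E t) \<and> vv (E t) \<le> X s) \<or> (X s \<le> vv (E t) \<and> vv (E t) \<le> X t)" by auto
      then have "\<bar>X s - X t\<bar> \<ge> g" unfolding g_def by auto
      then show False using s(3) by simp
    qed
    have "\<bar>X (Suc s) - X (Suc t)\<bar> \<le> K * \<bar>X s - X t\<bar>"
      using stp_invlip[OF s1[unfolded same] s0] .
    also have "\<dots> < K * (\<epsilon>/K)" using s(3) K_pos by (intro mult_strict_left_mono) auto
    also have "\<dots> = \<epsilon>" using K_pos by simp
    finally show "\<exists>s'. s' \<noteq> Suc t \<and> E s' = E (Suc t) \<and> \<bar>X s' - X (Suc t)\<bar> < \<epsilon>"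
      using same s(1) by (intro exI[of _ "Suc s"]) auto
  qed
qed

lemma acc_all: "acc 0 \<Longrightarrow> acc t"
  by (induction t) (auto intro: prop_acc)

lemma close_pair: "\<delta> > 0 \<Longrightarrow> \<exists>s s'. s \<noteq> s' \<and> E s = E s' \<and> \<bar>X s - X s'\<bar> < \<delta>"
proof -
  assume dl: "\<delta> > 0"
  have "\<exists>e. infinite {t. E t = e}"
  proof (rule ccontr)
    assume "\<not> (\<exists>e. infinite {t. E t = e})"
    then have "finite (\<Union>e. {t. E t = e})" by auto
    moreover have "(\<Union>e. {t. E t = e}) = UNIV" by auto
    ultimately show False by simp
  qed
  then obtain e where inf: "infinite {t. E t = e}" by blast
  obtain M :: nat where M: "1 / \<delta> < M" using reals_Archimedean2 by blast
  have Mpos: "real M > 0" using M dl by (smt (verit) divide_pos_pos)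
  define f where "f t = \<lfloor>X t * M\<rfloor>" for t
  have "f ` {t. E t = e} \<subseteq> {0..int M}"
  proof
    fix z assume "z \<in> f ` {t. E t = e}"
    then obtain t where z: "z = f t" by auto
    have "0 \<le> X t * M" "X t * M \<le> M" using Xint[of t] Mpos by (auto simp: mult_le_cancel_right1)
    then show "z \<in> {0..int M}" unfolding z f_def using floor_mono[of "X t * M" "real M"] by auto
  qed
  then have "\<not> inj_on f {t. E t = e}"
    using inf by (meson finite_atLeastAtMost_int finite_imageD finite_subset)
  then obtain s s' where ss: "E s = e" "E s' = e" "s \<noteq> s'" "f s = f s'"
    unfolding inj_on_def by auto
  have f1: "real_of_int (f s) \<le> X s * M" "X s * M < real_of_int (f s) + 1"
    unfolding f_def by (rule of_int_floor_le, rule real_of_int_floor_add_one_gt)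
  have f2: "real_of_int (f s') \<le> X s' * M" "X s' * M < real_of_int (f s') + 1"
    unfolding f_def by (rule of_int_floor_le, rule real_of_int_floor_add_one_gt)
  have "\<bar>X s * M - X s' * M\<bar> < 1" using f1 f2 ss(4) by (simp add: abs_less_iff)
  then have "\<bar>X s - X s'\<bar> * M < 1" by (simp add: abs_mult left_diff_distrib[symmetric])
  then have "\<bar>X s - X s'\<bar> < 1 / M" using Mpos by (simp add: less_divide_eq)
  also have "\<dots> < \<delta>" using M dl Mpos by (simp add: divide_less_eq mult.commute)
  finally have "\<bar>X s - X s'\<bar> < \<delta>" .
  then show ?thesis using ss by (intro exI[of _ s] exI[of _ s']) auto
qed

end


context sys begin
lemma stp_lt: "st i x j y \<Longrightarrow> x < d$i \<Longrightarrow> j = i+1" unfolding stp_def by auto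
lemma stp_gt: "st i x j y \<Longrightarrow> d$i < x \<Longrightarrow> j = i+2" unfolding stp_def by auto
end

context chn begin

lemma chp: "t \<ge> 1 \<Longrightarrow> st (E t) (X t) (E (t-1)) (X (t-1))"
  using ch[of "t-1"] by simp

lemma claimB:
  assumes dl: "\<delta> > 0"
  shows "(\<exists>t\<ge>1. E t = 1 \<and> \<bar>X t - d$1\<bar> < \<delta>) \<or> (\<exists>t\<ge>1. E t \<noteq> 1 \<and> \<bar>X t - d$(E t)\<bar> < \<delta>)"
proof -
  obtain s s' where ss: "s \<noteq> s'" "E s = E s'" "\<bar>X s - X s'\<bar> < \<delta>" using close_pair[OF dl] by blast
  define N where "N = max s s'"
  define Pr where "Pr = {(a,b). a < b \<and> b \<le> N \<and> E a = E b}"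
  define f where "f = (\<lambda>(a,b). \<bar>X a - X b\<bar>)"
  have fin: "finite Pr"
    by (rule finite_subset[of _ "{..N} \<times> {..N}"]) (auto simp: Pr_def)
  have mem: "(min s s', max s s') \<in> Pr" unfolding Pr_def N_def using ss by (auto simp: min_def max_def)
  have fmem: "f (min s s', max s s') = \<bar>X s - X s'\<bar>" unfolding f_def by (auto simp: min_def max_def abs_minus_commute)
  define m where "m = Min (f ` Pr)"
  have "m \<in> f ` Pr" unfolding m_def using fin mem by (intro Min_in) auto
  then obtain a b where ab: "(a,b) \<in> Pr" "m = \<bar>X a - X b\<bar>" unfolding f_def by auto
  have mle: "\<And>a' b'. (a',b') \<in> Pr \<Longrightarrow> m \<le> \<bar>X a' - X b'\<bar>"
  proof -
    fix a' b' assume "(a',b') \<in> Pr"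
    then have "m \<le> f (a',b')" unfolding m_def using fin by (intro Min_le) auto
    then show "m \<le> \<bar>X a' - X b'\<bar>" unfolding f_def by simp
  qed
  have "m \<le> \<bar>X s - X s'\<bar>" using mle[OF mem] fmem unfolding f_def by simp
  then have md: "m < \<delta>" using ss(3) by simp
  have ab2: "a < b" "b \<le> N" "E a = E b" using ab(1) unfolding Pr_def by auto
  show ?thesis
  proof (cases "a = 0")
    case True
    then have "E b = 1" "b \<ge> 1" "\<bar>X b - d$1\<bar> < \<delta>" using ab2 E0 X0 ab(2) md by (auto simp: abs_minus_commute)
    then show ?thesis by blast
  next
    case False
    then have a1: "a \<ge> 1" and b1: "b \<ge> 1" using ab2 by auto
    define i where "i = E a"
    have na: "X a \<noteq> d$i" using nd[OF a1] unfolding i_def .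
    have nb: "X b \<noteq> d$i" using nd[OF b1] ab2(3) unfolding i_def by simp
    have sa: "st i (X a) (E (a-1)) (X (a-1))" using chp[OF a1] unfolding i_def .
    have sb: "st i (X b) (E (b-1)) (X (b-1))" using chp[OF b1] ab2(3) unfolding i_def by simp
    have nab: "X a \<noteq> X b" using EX_eq[of a b] ab2 by auto
    have notside: "\<not> ((X a < d$i \<and> X b < d$i) \<or> (d$i < X a \<and> d$i < X b))"
    proof
      assume side: "(X a < d$i \<and> X b < d$i) \<or> (d$i < X a \<and> d$i < X b)"
      have eqE: "E (a-1) = E (b-1)" using side stp_lt[OF sa] stp_lt[OF sb] stp_gt[OF sa] stp_gt[OF sb] by auto
      have "\<bar>X (a-1) - X (b-1)\<bar> < \<bar>X a - X b\<bar>"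
        using stp_contr[OF sa sb[folded eqE]] nab by auto
      moreover have "(a-1, b-1) \<in> Pr" unfolding Pr_def using ab2 a1 eqE by auto
      ultimately show False using mle[of "a-1" "b-1"] ab(2) by simp
    qed
    have "(X a < d$i \<and> d$i < X b) \<or> (X b < d$i \<and> d$i < X a)" using notside na nb by auto
    then have "\<bar>X a - d$i\<bar> < m" using ab(2) by auto
    then have close: "\<bar>X a - d$(E a)\<bar> < \<delta>" using md unfolding i_def by simp
    show ?thesis
    proof (cases "E a = 1")
      case True then show ?thesis using close a1 by auto
    next
      case False then show ?thesis using close a1 by auto
    qed
  qed
qed

end


context chn begin

lemma C1:
  assumes s1: "\<And>n. s n \<ge> 1" and sE: "\<And>n. E (s n) = i" and sl: "(\<lambda>n. X (s n)) \<longlonglongrightarrow> d$i"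
  shows "\<exists>e p. (\<forall>\<^sub>F n in sequentially. E (s n + k) = e) \<and> (\<lambda>n. X (s n + k)) \<longlonglongrightarrow> p"
proof (induction k)
  case 0
  show ?case using sE sl by (intro exI[of _ i] exI[of _ "d$i"]) auto
next
  case (Suc k)
  then obtain e p where evE: "\<forall>\<^sub>F n in sequentially. E (s n + k) = e"
    and lp: "(\<lambda>n. X (s n + k)) \<longlonglongrightarrow> p" by blast
  define xs where "xs n = X (s n + Suc k)" for n
  define es where "es n = E (s n + Suc k)" for n
  define ys where "ys n = X (s n + k)" for n
  have chn: "\<And>n. st (es n) (xs n) (E (s n + k)) (ys n)" unfolding xs_def es_def ys_def
    using ch by simp
  have ev1: "\<forall>\<^sub>F n in sequentially. st (es n) (xs n) e (ys n)"
    using evE by eventually_elim (use chn in auto)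
  have ly: "ys \<longlonglongrightarrow> p" using lp unfolding ys_def .
  consider "p < vv e" | "vv e < p" | "p = vv e" by linarith
  then show ?case
  proof cases
    case 1
    have evl: "\<forall>\<^sub>F n in sequentially. ys n < vv e" using order_tendstoD(2)[OF ly 1] .
    have ev2: "\<forall>\<^sub>F n in sequentially. st (e+2) (xs n) e (ys n) \<and> es n = e+2"
      using ev1 evl
    proof eventually_elim
      case (elim n)
      then show ?case using stp_vert[OF elim(1)] by auto
    qed
    have "\<forall>\<^sub>F n in sequentially. st (e+2) (xs n) e (ys n)" using ev2 by (auto elim: eventually_mono)
    then obtain a where "xs \<longlonglongrightarrow> a" using stp_limit_pre[OF _ ly] by blast
    moreover have "\<forall>\<^sub>F n in sequentially. E (s n + Suc k) = e+2" using ev2 unfolding es_def by (auto elim: eventually_mono)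
    ultimately show ?thesis unfolding xs_def by blast
  next
    case 2
    have evl: "\<forall>\<^sub>F n in sequentially. vv e < ys n" using order_tendstoD(1)[OF ly 2] .
    have ev2: "\<forall>\<^sub>F n in sequentially. st (e+1) (xs n) e (ys n) \<and> es n = e+1"
      using ev1 evl
    proof eventually_elim
      case (elim n)
      then show ?case using stp_vert[OF elim(1)] by auto
    qed
    have "\<forall>\<^sub>F n in sequentially. st (e+1) (xs n) e (ys n)" using ev2 by (auto elim: eventually_mono)
    then obtain a where "xs \<longlonglongrightarrow> a" using stp_limit_pre[OF _ ly] by blast
    moreover have "\<forall>\<^sub>F n in sequentially. E (s n + Suc k) = e+1" using ev2 unfolding es_def by (auto elim: eventually_mono)
    ultimately show ?thesis unfolding xs_def by blast
  next
    case 3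
    have lk: "Lam / K > 0" using Lam_pos K_pos by simp
    have evd: "\<forall>\<^sub>F n in sequentially. dist (ys n) (vv e) < Lam / K"
      using tendstoD[OF ly lk] 3 by simp
    have "\<forall>\<^sub>F n in sequentially. False"
      using ev1 evd
    proof eventually_elim
      case (elim n)
      have m: "Lam \<le> xs n" "xs n \<le> 1 - Lam" using Xmargin unfolding xs_def by auto
      have kd: "K * \<bar>ys n - vv e\<bar> < Lam" using elim(2) K_pos by (simp add: dist_real_def field_simps)
      from stp_vert[OF elim(1)] show False
      proof (elim disjE conjE)
        assume "es n = e+2"
        then have "\<bar>xs n - 0\<bar> \<le> K * \<bar>ys n - vv e\<bar>" using stp_invlip[OF _ stp_vpt(1)] elim(1) by simp
        then show False using m kd by simp
      next
        assume "es n = e+1"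
        then have "\<bar>xs n - 1\<bar> \<le> K * \<bar>ys n - vv e\<bar>" using stp_invlip[OF _ stp_vpt(2)] elim(1) by simp
        then show False using m kd by simp
      qed
    qed
    then show ?thesis by simp
  qed
qed

end


context chn begin

lemma claimC:
  assumes i1: "i \<noteq> 1" and na: "\<not> acc 0"
  shows "\<exists>\<delta>>0. \<forall>t\<ge>1. E t = i \<longrightarrow> \<delta> \<le> \<bar>X t - d$i\<bar>"
proof (rule ccontr)
  assume "\<not> (\<exists>\<delta>>0. \<forall>t\<ge>1. E t = i \<longrightarrow> \<delta> \<le> \<bar>X t - d$i\<bar>)"
  then have "\<forall>n. \<exists>t. t \<ge> 1 \<and> E t = i \<and> \<bar>X t - d$i\<bar> < inverse (real (Suc n))"
    by (metis inverse_positive_iff_positive not_le of_nat_0_less_iff zero_less_Suc)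
  then obtain s where s: "\<And>n. s n \<ge> 1 \<and> E (s n) = i \<and> \<bar>X (s n) - d$i\<bar> < inverse (real (Suc n))"
    by metis
  have s1: "\<And>n. s n \<ge> 1" and sE: "\<And>n. E (s n) = i" using s by auto
  have sl: "(\<lambda>n. X (s n)) \<longlonglongrightarrow> d$i"
  proof (rule tendsto_bound[where C=1 and ys="\<lambda>n. inverse (real (Suc n))" and b=0])
    show "\<forall>\<^sub>F n in sequentially. \<bar>X (s n) - d$i\<bar> \<le> 1 * \<bar>inverse (real (Suc n)) - 0\<bar>"
    proof (rule always_eventually, rule allI)
      fix n
      have "\<bar>X (s n) - d$i\<bar> < inverse (real (Suc n))" using s by blast
      then show "\<bar>X (s n) - d$i\<bar> \<le> 1 * \<bar>inverse (real (Suc n)) - 0\<bar>" by simp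
    qed
    show "(\<lambda>n. inverse (real (Suc n))) \<longlonglongrightarrow> 0" by (rule LIMSEQ_inverse_real_of_nat)
  qed
  have "\<forall>k. \<exists>e p. (\<forall>\<^sub>F n in sequentially. E (s n + k) = e) \<and> (\<lambda>n. X (s n + k)) \<longlonglongrightarrow> p"
    using C1[OF s1 sE sl] by blast
  then obtain e p where evE: "\<And>k. \<forall>\<^sub>F n in sequentially. E (s n + k) = e k"
    and lp: "\<And>k. (\<lambda>n. X (s n + k)) \<longlonglongrightarrow> p k" by metis
  have e0: "e 0 = i"
  proof -
    have "\<forall>\<^sub>F n in sequentially. i = e 0" using evE[of 0] sE by simp
    then show ?thesis by simp
  qed
  have p0: "p 0 = d$i" using LIMSEQ_unique[OF lp[of 0]] sl by simp
  have stp_ep: "\<And>k. st (e (Suc k)) (p (Suc k)) (e k) (p k)"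
  proof -
    fix k
    have "\<forall>\<^sub>F n in sequentially. st (e (Suc k)) (X (s n + Suc k)) (e k) (X (s n + k))"
      using evE[of k] evE[of "Suc k"]
    proof eventually_elim
      case (elim n) then show ?case using ch[of "s n + k"] by simp
    qed
    then show "st (e (Suc k)) (p (Suc k)) (e k) (p k)" by (rule stp_closed[OF _ lp lp])
  qed
  have pint: "\<And>k. 0 < p k \<and> p k < 1" using stp_int[OF stp_ep] by blast
  have fin: "finite (range (\<lambda>k. (e k, p k)))" using FB[of i e p] i1 e0 p0 stp_ep by blast
  have "\<not> inj (\<lambda>k. (e k, p k))" using fin finite_imageD infinite_UNIV_nat by blast
  then obtain x y where xy: "x \<noteq> y" "(e x, p x) = (e y, p y)" unfolding inj_def by blast
  define k where "k = min x y"
  define k' where "k' = max x y"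
  have kk: "k < k'" "(e k, p k) = (e k', p k')" using xy unfolding k_def k'_def by (auto simp: min_def max_def)
  have per: "\<And>m. (e (k+m), p (k+m)) = (e (k'+m), p (k'+m))"
  proof -
    fix m show "(e (k+m), p (k+m)) = (e (k'+m), p (k'+m))"
    proof (induction m)
      case 0 then show ?case using kk by simp
    next
      case (Suc m)
      have a1: "st (e (Suc (k+m))) (p (Suc (k+m))) (e (k+m)) (p (k+m))" by (rule stp_ep)
      have a2: "st (e (Suc (k'+m))) (p (Suc (k'+m))) (e (k+m)) (p (k+m))" using stp_ep[of "k'+m"] Suc by simp
      have "e (Suc (k'+m)) = e (Suc (k+m)) \<and> p (Suc (k'+m)) = p (Suc (k+m))"
        using stp_bu_int[OF a1 a2] pint[of "Suc (k+m)"] by simp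
      then show ?case by simp
    qed
  qed
  define P where "P = k' - k"
  have P1: "P \<ge> 1" using kk unfolding P_def by simp
  have per': "\<And>m. m \<ge> k \<Longrightarrow> e m = e (m+P) \<and> p m = p (m+P)"
  proof -
    fix m assume "m \<ge> k"
    then have "m = k + (m-k)" "m + P = k' + (m-k)" using kk unfolding P_def by auto
    then show "e m = e (m+P) \<and> p m = p (m+P)" using per[of "m-k"] by (metis prod.inject)
  qed
  define Q where "Q = 2*P"
  have Q1: "Q \<ge> 1" "0 < Q" using P1 unfolding Q_def by auto
  have per2: "e (k+Q) = e k \<and> p (k+Q) = p k"
    using per'[of k] per'[of "k+P"] unfolding Q_def by (simp add: add.assoc mult_2)
  have not1: "\<And>m. e m = 1 \<Longrightarrow> p m \<noteq> d$1"
  proof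
    fix m assume em: "e m = 1" and pm: "p m = d$1"
    have "acc 0" unfolding acc_def
    proof (intro allI impI)
      fix \<epsilon> :: real assume "\<epsilon> > 0"
      have ev: "\<forall>\<^sub>F n in sequentially. E (s n + m) = 1 \<and> dist (X (s n + m)) (d$1) < \<epsilon>"
        using evE[of m] tendstoD[OF lp[of m] \<open>\<epsilon>>0\<close>]
      proof eventually_elim
        case (elim n) then show ?case using em pm by simp
      qed
      have "\<exists>n. E (s n + m) = 1 \<and> dist (X (s n + m)) (d$1) < \<epsilon>"
        by (rule eventually_happens'[OF trivial_limit_sequentially ev])
      then obtain n where "E (s n + m) = 1 \<and> dist (X (s n + m)) (d$1) < \<epsilon>" by (elim exE)
      moreover have "s n + m \<noteq> 0" using s1[of n] by simp
      ultimately show "\<exists>s'. s' \<noteq> 0 \<and> E s' = E 0 \<and> \<bar>X s' - X 0\<bar> < \<epsilon>"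
        using E0 X0 by (intro exI[of _ "s n + m"]) (auto simp: dist_real_def)
    qed
    then show False using na by simp
  qed
  define ce where "ce m = e (k + Q - m)" for m
  define cp where "cp m = p (k + Q - m)" for m
  have cyc: "\<And>m. m < Q \<Longrightarrow> st (ce m) (cp m) (ce (Suc m)) (cp (Suc m))"
  proof -
    fix m assume "m < Q"
    then have eq: "k + Q - m = Suc (k + Q - Suc m)" by simp
    show "st (ce m) (cp m) (ce (Suc m)) (cp (Suc m))" unfolding ce_def cp_def eq by (rule stp_ep)
  qed
  have cQ: "ce Q = ce 0" "cp Q = cp 0" unfolding ce_def cp_def using per2 by auto
  define S where "S = (\<lambda>m. \<bar>cp m - d$1\<bar>) ` {m. m \<le> Q \<and> ce m = 1}"
  define \<eta> where "\<eta> = Min (insert 1 S)"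
  have finS: "finite S" unfolding S_def by simp
  have \<eta>pos: "\<eta> > 0" unfolding \<eta>_def
  proof (subst Min_gr_iff)
    show "finite (insert 1 S)" using finS by simp
    show "insert 1 S \<noteq> {}" by simp
    show "\<forall>a\<in>insert 1 S. 0 < a" unfolding S_def ce_def cp_def using not1 by auto
  qed
  have \<eta>le: "\<And>m. m \<le> Q \<Longrightarrow> ce m = 1 \<Longrightarrow> \<eta> \<le> \<bar>cp m - d$1\<bar>"
    unfolding \<eta>_def S_def using finS by (intro Min_le) (auto simp: S_def)
  have evn: "\<forall>\<^sub>F n in sequentially. \<forall>j\<in>{..k+Q}. E (s n + j) = e j \<and> dist (X (s n + j)) (p j) < \<eta>"
    by (rule eventually_ball_finite) (auto intro: eventually_conj evE tendstoD[OF lp \<eta>pos])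
  have "\<exists>n. \<forall>j\<in>{..k+Q}. E (s n + j) = e j \<and> dist (X (s n + j)) (p j) < \<eta>"
    by (rule eventually_happens'[OF trivial_limit_sequentially evn])
  then obtain n where n0: "\<forall>j\<in>{..k+Q}. E (s n + j) = e j \<and> dist (X (s n + j)) (p j) < \<eta>" by (elim exE)
  then have n: "\<And>j. j \<le> k + Q \<Longrightarrow> E (s n + j) = e j \<and> \<bar>X (s n + j) - p j\<bar> < \<eta>"
    by (auto simp: dist_real_def)
  define r where "r m = s n + (k + Q - m)" for m
  have rEX: "E (r m) = ce m \<and> \<bar>X (r m) - cp m\<bar> < \<eta>" for m
  proof -
    have "k + Q - m \<le> k + Q" by simp
    from n[OF this] show ?thesis unfolding r_def ce_def cp_def .
  qed
  have rE: "\<And>m. E (r m) = ce m" and rX: "\<And>m. m \<le> Q \<Longrightarrow> \<bar>X (r m) - cp m\<bar> < \<eta>"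
    using rEX by auto
  have rch: "\<And>m. m < Q \<Longrightarrow> st (ce m) (X (r m)) (ce (Suc m)) (X (r (Suc m)))"
  proof -
    fix m assume "m < Q"
    then have eq: "r m = Suc (r (Suc m))" unfolding r_def by simp
    have "st (E (Suc (r (Suc m)))) (X (Suc (r (Suc m)))) (E (r (Suc m))) (X (r (Suc m)))" by (rule ch)
    then show "st (ce m) (X (r m)) (ce (Suc m)) (X (r (Suc m)))" unfolding eq[symmetric] rE .
  qed
  define Btw where "Btw m t \<longleftrightarrow> E t = ce m \<and> betw (cp m) (X (r m)) (X t)" for m t
  have stepB: "\<And>m t. m < Q \<Longrightarrow> 1 \<le> t \<Longrightarrow> Btw m t \<Longrightarrow> Btw (Suc m) (t - 1)"
  proof -
    fix m t assume m: "m < Q" and t: "1 \<le> t" and b: "Btw m t"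
    obtain yz where yz: "st (ce m) (X t) (ce (Suc m)) yz" "betw (cp (Suc m)) (X (r (Suc m))) yz"
      using stp_betw[OF cyc[OF m] rch[OF m]] b unfolding Btw_def by blast
    have c: "st (ce m) (X t) (E (t-1)) (X (t-1))" using chp[OF t] b unfolding Btw_def by simp
    have "X t \<noteq> d$(ce m)" using nd[OF t] b unfolding Btw_def by simp
    then have "E (t-1) = ce (Suc m) \<and> X (t-1) = yz" using stp_det[OF c yz(1)] by simp
    then show "Btw (Suc m) (t-1)" unfolding Btw_def using yz(2) by simp
  qed
  define D where "D m = X (r m) - cp m" for m
  have inv: "\<And>m. m \<le> Q \<Longrightarrow> betw 0 ((-1)^m * D 0) (D m)"
  proof -
    fix m show "m \<le> Q \<Longrightarrow> betw 0 ((-1)^m * D 0) (D m)"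
    proof (induction m)
      case 0 then show ?case unfolding betw_def by auto
    next
      case (Suc m)
      then have m: "m < Q" by simp
      have IH: "betw 0 ((-1)^m * D 0) (D m)" using Suc by simp
      have a1: "D m \<ge> 0 \<longrightarrow> D (Suc m) \<le> 0"
        using stp_anti[OF cyc[OF m] rch[OF m]] unfolding D_def by simp
      have a2: "D m \<le> 0 \<longrightarrow> D (Suc m) \<ge> 0"
        using stp_anti[OF rch[OF m] cyc[OF m]] unfolding D_def by simp
      have a3: "\<bar>D (Suc m)\<bar> \<le> \<bar>D m\<bar>"
        using stp_contr[OF rch[OF m] cyc[OF m]] unfolding D_def by simp
      have "betw 0 (- ((-1)^m * D 0)) (D (Suc m))" by (rule betw_flip[OF IH a1 a2 a3])
      then show ?case by simp
    qed
  qed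
  have "(-1::real)^Q = 1" unfolding Q_def by simp
  then have "betw 0 (D 0) (D Q)" using inv[of Q] by simp
  then have W: "betw (cp 0) (X (r 0)) (X (r Q))" unfolding D_def using cQ by (simp add: betw_shift)
  have wrap: "\<And>t. Btw Q t \<Longrightarrow> Btw 0 t"
    unfolding Btw_def using cQ W betw_trans by metis
  have never0: "\<And>m. m \<le> Q \<Longrightarrow> \<not> Btw m 0"
  proof
    fix m assume m: "m \<le> Q" and b: "Btw m 0"
    have c1: "ce m = 1" using b E0 unfolding Btw_def by simp
    have "\<bar>X 0 - cp m\<bar> \<le> \<bar>X (r m) - cp m\<bar>" using betw_dist b unfolding Btw_def by blast
    also have "\<dots> < \<eta>" using rX[OF m] .
    also have "\<dots> \<le> \<bar>cp m - d$1\<bar>" using \<eta>le[OF m c1] .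
    finally show False using X0 by (simp add: abs_minus_commute)
  qed
  have allB: "\<And>t. \<forall>m\<le>Q. \<not> Btw m t"
  proof -
    fix t show "\<forall>m\<le>Q. \<not> Btw m t"
    proof (induction t)
      case 0 then show ?case using never0 by blast
    next
      case (Suc t)
      show ?case
      proof (intro allI impI notI)
        fix m assume m: "m \<le> Q" and b: "Btw m (Suc t)"
        show False
        proof (cases "m < Q")
          case True
          then have "Btw (Suc m) t" using stepB[OF True _ b] by simp
          then show False using Suc True by auto
        next
          case False
          then have "m = Q" using m by simp
          then have "Btw 0 (Suc t)" using wrap b by simp
          then have "Btw 1 t" using stepB[OF Q1(2) _ \<open>Btw 0 (Suc t)\<close>] by simp
          then show False using Suc Q1 by auto
        qed
      qed
    qed
  qed
  have "Btw 0 (r 0)" unfolding Btw_def using rE betw_refl by simp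
  then show False using allB by blast
qed

end


context chn begin

lemma acc0: "acc 0"
proof (rule ccontr)
  assume na: "\<not> acc 0"
  have n2: "(2::3) \<noteq> 1" and n3: "(3::3) \<noteq> 1" by simp_all
  obtain \<delta>2 where d2: "\<delta>2 > 0" "\<And>t. t \<ge> 1 \<Longrightarrow> E t = 2 \<Longrightarrow> \<delta>2 \<le> \<bar>X t - d$2\<bar>"
    using claimC[OF n2 na] by blast
  obtain \<delta>3 where d3: "\<delta>3 > 0" "\<And>t. t \<ge> 1 \<Longrightarrow> E t = 3 \<Longrightarrow> \<delta>3 \<le> \<bar>X t - d$3\<bar>"
    using claimC[OF n3 na] by blast
  have "acc 0" unfolding acc_def
  proof (intro allI impI)
    fix \<epsilon> :: real assume e: "\<epsilon> > 0"
    define \<delta> where "\<delta> = min \<epsilon> (min \<delta>2 \<delta>3)"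
    have dl: "\<delta> > 0" unfolding \<delta>_def using e d2(1) d3(1) by simp
    from claimB[OF dl] show "\<exists>s. s \<noteq> 0 \<and> E s = E 0 \<and> \<bar>X s - X 0\<bar> < \<epsilon>"
    proof (elim disjE exE conjE)
      fix t assume t: "t \<ge> 1" "E t = 1" "\<bar>X t - d$1\<bar> < \<delta>"
      then show ?thesis using E0 X0 unfolding \<delta>_def by (intro exI[of _ t]) auto
    next
      fix t assume t: "t \<ge> 1" "E t \<noteq> 1" "\<bar>X t - d$(E t)\<bar> < \<delta>"
      have "E t = 2 \<or> E t = 3" using exhaust_3[of "E t"] t(2) by auto
      then show ?thesis
      proof
        assume "E t = 2" then show ?thesis using d2(2)[OF t(1)] t(3) unfolding \<delta>_def by auto
      next
        assume "E t = 3" then show ?thesis using d3(2)[OF t(1)] t(3) unfolding \<delta>_def by auto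
      qed
    qed
  qed
  then show False using na by simp
qed

lemma acc_every: "acc t" using acc_all[OF acc0] .

end


lemma pt_comp: "pt x i $ k = (if k = i+1 then 1-x else if k = i+2 then x else 0)"
  unfolding pt_def axis_def by simp

lemma pt_c: "pt x i $ i = 0" "pt x i $ (i+1) = 1 - x" "pt x i $ (i+2) = x"
  by (simp_all add: pt_comp)

lemma vec3_eq: "(z::real^3) = w \<longleftrightarrow> z$i = w$i \<and> z$(i+1) = w$(i+1) \<and> z$(i+2) = w$(i+2)"
proof
  assume h: "z$i = w$i \<and> z$(i+1) = w$(i+1) \<and> z$(i+2) = w$(i+2)"
  show "z = w" unfolding vec_eq_iff
  proof
    fix k
    from t3_cases[of i k] show "z$k = w$k" using h by auto
  qed
qed simp

lemma pt_A0: "0 \<le> x \<Longrightarrow> x \<le> 1 \<Longrightarrow> pt x i \<in> A0"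
proof -
  assume "0 \<le> x" "x \<le> 1"
  have "pt x i \<in> A0i i" unfolding A0i_def
  proof (intro CollectI conjI allI)
    show "pt x i $ 1 + pt x i $ 2 + pt x i $ 3 = 1" using sum3[of "pt x i" i] by (simp add: pt_c)
    show "pt x i $ i = 0" by (simp add: pt_c)
    fix l show "0 \<le> pt x i $ l" using \<open>0 \<le> x\<close> \<open>x \<le> 1\<close> by (simp add: pt_comp)
  qed
  then show ?thesis unfolding A0_def by blast
qed

lemma A0_pt: "z \<in> A0 \<Longrightarrow> \<exists>i x. 0 \<le> x \<and> x \<le> 1 \<and> z = pt x i"
proof -
  assume "z \<in> A0"
  then obtain i where z: "z \<in> A0i i" unfolding A0_def by blast
  then have s: "z$i + z$(i+1) + z$(i+2) = 1" "z$i = 0" "\<And>l. z$l \<ge> 0"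
    unfolding A0i_def using sum3[of z i] by auto
  have "z = pt (z$(i+2)) i" using s by (subst vec3_eq[of _ _ i]) (simp add: pt_c)
  moreover have "0 \<le> z$(i+2)" "z$(i+2) \<le> 1" using s(1,2) s(3)[of "i+2"] s(3)[of "i+1"] by auto
  ultimately show ?thesis by blast
qed

lemma pt_inj: "0 < x \<Longrightarrow> x < 1 \<Longrightarrow> pt x i = pt x' i' \<Longrightarrow> i' = i \<and> x' = x"
proof -
  assume x: "0 < x" "x < 1" and eq: "pt x i = pt x' i'"
  consider "i' = i" | "i' = i+1" | "i' = i+2" using t3_cases[of i' i] by blast
  then show ?thesis
  proof cases
    case 1 then show ?thesis using arg_cong[OF eq, of "\<lambda>v. v $ (i+2)"] by (simp add: pt_c)
  next
    case 2
    have "pt x' i' $ (i+1) = 0" using 2 pt_c(1)[of x' i'] by simp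
    then have "pt x i $ (i+1) = 0" using eq by simp
    then show ?thesis using x by (simp add: pt_c)
  next
    case 3
    have "pt x' i' $ (i+2) = 0" using 3 pt_c(1)[of x' i'] by simp
    then have "pt x i $ (i+2) = 0" using eq by simp
    then show ?thesis using x by (simp add: pt_c)
  qed
qed

lemma pt_vertex: "pt 0 (j+2) = pt 1 (j+1)"
  unfolding pt_def by simp

lemma pt_dist: "dist (pt x i) (pt x' i) \<le> 2 * \<bar>x - x'\<bar>"
proof -
  have "pt x i - pt x' i = (x' - x) *\<^sub>R axis (i+1) 1 + (x - x') *\<^sub>R axis (i+2) (1::real)"
    unfolding pt_def by (simp add: algebra_simps)
  then have "norm (pt x i - pt x' i) \<le> norm ((x' - x) *\<^sub>R axis (i+1) (1::real)) + norm ((x - x') *\<^sub>R axis (i+2) (1::real))"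
    by (simp only: norm_triangle_ineq)
  also have "\<dots> = 2 * \<bar>x - x'\<bar>" by (simp add: norm_axis_1 abs_minus_commute)
  finally show ?thesis by (simp add: dist_norm)
qed

context sys begin

lemma fmap_comp: "fmap \<rho> j z $ l = (if l = j then 0 else ((1 - \<rho>$j) * z$l + \<rho>$l * z$j) / ((1 - \<rho>$j) + th * z$j))"
  unfolding fmap_def by simp

lemma fmap_L: "x \<le> 1 \<Longrightarrow> fmap \<rho> (i+1) (pt x i) = pt (FL \<rho> i x) (i+1)"
proof -
  assume x: "x \<le> 1"
  define D where "D = 1 - \<rho>$(i+1) + th*(1-x)"
  have D: "D > 0" unfolding D_def using aL(1)[of i] th_pos x by (smt (verit) mult_nonneg_nonneg)
  have e: "th = \<rho>$i + \<rho>$(i+1) + \<rho>$(i+2) - 1" by (rule th_i)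
  have c1: "fmap \<rho> (i+1) (pt x i) $ i = FL \<rho> i x"
    unfolding fmap_comp FL_def by (simp add: pt_c)
  have c2: "fmap \<rho> (i+1) (pt x i) $ (i+2) = 1 - FL \<rho> i x"
  proof -
    have "fmap \<rho> (i+1) (pt x i) $ (i+2) = ((1 - \<rho>$(i+1)) * x + \<rho>$(i+2) * (1-x)) / D"
      unfolding fmap_comp D_def by (simp add: pt_c)
    also have "\<dots> = 1 - \<rho>$i*(1-x)/D" using D by (simp add: field_simps D_def e)
    finally show ?thesis unfolding FL_def D_def by simp
  qed
  have c3: "fmap \<rho> (i+1) (pt x i) $ (i+1) = 0" unfolding fmap_comp by simp
  show ?thesis using c1 c2 c3 by (subst vec3_eq[of _ _ i]) (simp add: pt_comp)
qed

lemma fmap_R: "0 \<le> x \<Longrightarrow> fmap \<rho> (i+2) (pt x i) = pt (FR \<rho> i x) (i+2)"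
proof -
  assume x: "0 \<le> x"
  define D where "D = 1 - \<rho>$(i+2) + th*x"
  have D: "D > 0" unfolding D_def using aR(1)[of i] th_pos x by (smt (verit) mult_nonneg_nonneg)
  have e: "th = \<rho>$i + \<rho>$(i+1) + \<rho>$(i+2) - 1" by (rule th_i)
  have c1: "fmap \<rho> (i+2) (pt x i) $ (i+1) = FR \<rho> i x"
    unfolding fmap_comp FR_def by (simp add: pt_c)
  have c2: "fmap \<rho> (i+2) (pt x i) $ i = 1 - FR \<rho> i x"
  proof -
    have "fmap \<rho> (i+2) (pt x i) $ i = (\<rho>$i * x) / D"
      unfolding fmap_comp D_def by (simp add: pt_c)
    also have "\<dots> = 1 - ((1-\<rho>$(i+2))*(1-x)+\<rho>$(i+1)*x)/D" using D by (simp add: field_simps D_def e)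
    finally show ?thesis unfolding FR_def D_def by simp
  qed
  have c3: "fmap \<rho> (i+2) (pt x i) $ (i+2) = 0" unfolding fmap_comp by simp
  show ?thesis using c1 c2 c3 by (subst vec3_eq[of _ _ i]) (simp add: pt_comp)
qed

end


context sys begin

abbreviation "ph \<equiv> phi \<rho> d"

lemma phi_fwd: "0 \<le> x \<Longrightarrow> x \<le> 1 \<Longrightarrow> st i x j y \<Longrightarrow> pt y j \<in> ph (pt x i)"
proof -
  assume x: "0 \<le> x" "x \<le> 1" and s: "st i x j y"
  have A: "pt x i \<in> A0" using pt_A0[OF x] .
  from s show ?thesis unfolding stp_def
  proof (elim disjE conjE)
    assume h: "j = i+1" "0 \<le> x" "x \<le> d$i" "y = FL \<rho> i x"
    have sw: "j \<in> switch d (pt x i)" unfolding switch_def using h x by blast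
    have nA: "pt x i \<notin> A0i j" unfolding A0i_def using h d_lt1[of i] by (simp add: pt_c)
    have fm: "fmap \<rho> j (pt x i) = pt y j" using fmap_L[OF x(2)] h by simp
    show ?thesis unfolding phi_def using A sw nA fm[symmetric] by (simp only: if_True) blast
  next
    assume h: "j = i+2" "d$i \<le> x" "x \<le> 1" "y = FR \<rho> i x"
    have sw: "j \<in> switch d (pt x i)" unfolding switch_def using h x by blast
    have nA: "pt x i \<notin> A0i j" unfolding A0i_def using h d_pos[of i] by (simp add: pt_c)
    have fm: "fmap \<rho> j (pt x i) = pt y j" using fmap_R[OF x(1)] h by simp
    show ?thesis unfolding phi_def using A sw nA fm[symmetric] by (simp only: if_True) blast
  qed
qed

lemma phi_inv: "w \<in> ph z \<Longrightarrow> \<exists>i x j y. 0 \<le> x \<and> x \<le> 1 \<and> z = pt x i \<and> w = pt y j \<and> st i x j y"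
proof -
  assume w: "w \<in> ph z"
  then have "z \<in> A0" unfolding phi_def by (auto split: if_splits)
  then obtain j where j: "j \<in> switch d z" "w = fmap \<rho> j z" using w unfolding phi_def by auto
  then obtain x i where xi: "0 \<le> x" "x \<le> 1" "z = pt x i" "(x \<le> d$i \<and> j = i+1) \<or> (x \<ge> d$i \<and> j = i+2)"
    unfolding switch_def by blast
  from xi(4) show ?thesis
  proof (elim disjE conjE)
    assume h: "x \<le> d$i" "j = i+1"
    have "w = pt (FL \<rho> i x) j" using j(2) xi(3) fmap_L[OF xi(2)] h by simp
    moreover have "st i x j (FL \<rho> i x)" unfolding stp_def using h xi by simp
    ultimately show ?thesis using xi by blast
  next
    assume h: "d$i \<le> x" "j = i+2"
    have "w = pt (FR \<rho> i x) j" using j(2) xi(3) fmap_R[OF xi(1)] h by simp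
    moreover have "st i x j (FR \<rho> i x)" unfolding stp_def using h xi by simp
    ultimately show ?thesis using xi by blast
  qed
qed

lemma phi_nonempty: "z \<in> A0 \<Longrightarrow> \<exists>w. w \<in> ph z"
proof -
  assume "z \<in> A0"
  then obtain i x where x: "0 \<le> x" "x \<le> 1" "z = pt x i" using A0_pt by blast
  show ?thesis
  proof (cases "x \<le> d$i")
    case True
    then have "st i x (i+1) (FL \<rho> i x)" unfolding stp_def using x by simp
    then show ?thesis using phi_fwd x by blast
  next
    case False
    then have "st i x (i+2) (FR \<rho> i x)" unfolding stp_def using x by simp
    then show ?thesis using phi_fwd x by blast
  qed
qed

lemma phi_A0: "w \<in> ph z \<Longrightarrow> w \<in> A0"
  using phi_inv stp_int pt_A0 by (metis less_imp_le)

lemma traj_exists: "z \<in> A0 \<Longrightarrow> \<exists>zs. trajectory \<rho> d zs \<and> zs 0 = z"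
proof -
  assume z: "z \<in> A0"
  define nx where "nx w = (SOME w'. w' \<in> ph w)" for w
  define zs where "zs t = (nx ^^ t) z" for t
  have inA: "zs t \<in> A0" for t
  proof (induction t)
    case 0 then show ?case using z unfolding zs_def by simp
  next
    case (Suc t)
    have "nx (zs t) \<in> ph (zs t)" unfolding nx_def using phi_nonempty[OF Suc] by (rule someI_ex)
    then show ?case using phi_A0 unfolding zs_def by simp
  qed
  have "zs (Suc t) \<in> ph (zs t)" for t
  proof -
    have "nx (zs t) \<in> ph (zs t)" unfolding nx_def using phi_nonempty[OF inA] by (rule someI_ex)
    then show ?thesis unfolding zs_def by simp
  qed
  then show ?thesis unfolding trajectory_def zs_def by (intro exI[of _ zs]) (auto simp: zs_def)
qed

lemma BU: "w \<in> ph z \<Longrightarrow> w \<in> ph z' \<Longrightarrow> z = z'"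
proof -
  assume w1: "w \<in> ph z" and w2: "w \<in> ph z'"
  obtain i x j y where a: "0 \<le> x" "x \<le> 1" "z = pt x i" "w = pt y j" "st i x j y" using phi_inv[OF w1] by blast
  obtain i' x' j' y' where b: "0 \<le> x'" "x' \<le> 1" "z' = pt x' i'" "w = pt y' j'" "st i' x' j' y'" using phi_inv[OF w2] by blast
  have y: "0 < y" "y < 1" using stp_int[OF a(5)] by auto
  have "pt y j = pt y' j'" using a(4) b(4) by simp
  then have "j' = j \<and> y' = y" using pt_inj[OF y] by blast
  then have b5: "st i' x' j y" using b(5) by simp
  from stp_bu[OF a(5) b5] show "z = z'"
    using a(3) b(3) pt_vertex by auto
qed

definition Rset where "Rset w t = {z. \<exists>zs. trajectory \<rho> d zs \<and> zs 0 = z \<and> zs t = w}"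

lemma traj_shift: "trajectory \<rho> d zs \<Longrightarrow> trajectory \<rho> d (\<lambda>t. zs (t + k))"
  unfolding trajectory_def by simp

lemma R_unique: "z \<in> Rset w t \<Longrightarrow> z' \<in> Rset w t \<Longrightarrow> z = z'"
proof (induction t arbitrary: z z')
  case 0 then show ?case unfolding Rset_def by auto
next
  case (Suc t)
  obtain zs where zs: "trajectory \<rho> d zs" "zs 0 = z" "zs (Suc t) = w" using Suc.prems(1) unfolding Rset_def by blast
  obtain zs' where zs': "trajectory \<rho> d zs'" "zs' 0 = z'" "zs' (Suc t) = w" using Suc.prems(2) unfolding Rset_def by blast
  have "zs 1 \<in> Rset w t" unfolding Rset_def using traj_shift[OF zs(1), of 1] zs(3) by (intro CollectI exI[of _ "\<lambda>n. zs (n+1)"]) simp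
  moreover have "zs' 1 \<in> Rset w t" unfolding Rset_def using traj_shift[OF zs'(1), of 1] zs'(3) by (intro CollectI exI[of _ "\<lambda>n. zs' (n+1)"]) simp
  ultimately have "zs 1 = zs' 1" using Suc.IH by blast
  moreover have "zs 1 \<in> ph z" "zs' 1 \<in> ph z'" using zs zs' unfolding trajectory_def by (metis One_nat_def)+
  ultimately show ?case using BU by metis
qed

lemma R_down: "z \<in> Rset w (Suc t) \<Longrightarrow> \<exists>z'. z' \<in> Rset w t \<and> z' \<in> ph z"
proof -
  assume "z \<in> Rset w (Suc t)"
  then obtain zs where zs: "trajectory \<rho> d zs" "zs 0 = z" "zs (Suc t) = w" unfolding Rset_def by blast
  have "zs 1 \<in> Rset w t" unfolding Rset_def using traj_shift[OF zs(1), of 1] zs(3) by (intro CollectI exI[of _ "\<lambda>n. zs (n+1)"]) simp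
  moreover have "zs 1 \<in> ph z" using zs unfolding trajectory_def by (metis One_nat_def)
  ultimately show ?thesis by blast
qed

lemma R_shiftk: "trajectory \<rho> d zs \<Longrightarrow> zs (k + t) = w \<Longrightarrow> zs k \<in> Rset w t"
  unfolding Rset_def using traj_shift[of zs k] by (intro CollectI exI[of _ "\<lambda>n. zs (n+k)"]) (auto simp: add.commute)

lemma preimages_eq: "preimages \<rho> d w = {z. \<exists>t\<ge>1. z \<in> Rset w t}"
  unfolding preimages_def preimage_def Rset_def by blast

end


lemma subsingleton_finite: "(\<And>a b. a \<in> S \<Longrightarrow> b \<in> S \<Longrightarrow> a = b) \<Longrightarrow> finite S"
proof (cases "S = {}")
  case False
  then obtain a where a: "a \<in> S" by blast
  assume h: "\<And>a b. a \<in> S \<Longrightarrow> b \<in> S \<Longrightarrow> a = b"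
  then have "S = {a}" using a by blast
  then show ?thesis by simp
qed simp

context sys begin

lemma R_fin: "finite (Rset w t)" by (rule subsingleton_finite) (rule R_unique)

lemma FB_R3:
  assumes fin: "finite (preimages \<rho> d (pt (d$i) i))"
    and e0: "e 0 = i" and p0: "p 0 = d$i" and chn: "\<forall>k. st (e (Suc k)) (p (Suc k)) (e k) (p k)"
  shows "finite (range (\<lambda>k. (e k, p k)))"
proof -
  define wi where "wi = pt (d$i) i"
  have wiA: "wi \<in> A0" unfolding wi_def using d_pos[of i] d_lt1[of i] by (intro pt_A0) auto
  obtain T where T: "trajectory \<rho> d T" "T 0 = wi" using traj_exists[OF wiA] by blast
  have pint: "\<And>k. 0 < p k \<and> p k < 1" using stp_int chn by blast
  have pdom: "\<And>k. 0 \<le> p k \<and> p k \<le> 1" using pint by (simp add: less_imp_le)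
  define G where "G = (\<lambda>k. (e k, p k)) ` {1..}"
  have sub: "(\<lambda>(j,y). pt y j) ` G \<subseteq> preimages \<rho> d wi"
  proof
    fix z assume "z \<in> (\<lambda>(j,y). pt y j) ` G"
    then obtain k where k: "k \<ge> 1" "z = pt (p k) (e k)" unfolding G_def by auto
    define zs where "zs n = (if n \<le> k then pt (p (k-n)) (e (k-n)) else T (n-k))" for n
    have tr: "trajectory \<rho> d zs" unfolding trajectory_def
    proof
      fix n
      show "zs (Suc n) \<in> ph (zs n)"
      proof (cases "Suc n \<le> k")
        case True
        then have eq: "k - n = Suc (k - Suc n)" by simp
        have "st (e (k - n)) (p (k - n)) (e (k - Suc n)) (p (k - Suc n))"
          unfolding eq using chn by blast
        then have "pt (p (k - Suc n)) (e (k - Suc n)) \<in> ph (pt (p (k-n)) (e (k-n)))"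
          using phi_fwd pdom by blast
        then show ?thesis unfolding zs_def using True by simp
      next
        case False
        show ?thesis
        proof (cases "n = k")
          case True
          have "zs n = T 0" unfolding zs_def using True e0 p0 T(2) wi_def by simp
          moreover have "zs (Suc n) = T 1" unfolding zs_def using True by simp
          ultimately show ?thesis using T(1) unfolding trajectory_def by (metis One_nat_def)
        next
          case False
          then have nk: "n > k" using \<open>\<not> Suc n \<le> k\<close> by simp
          have sk: "Suc n - k = Suc (n - k)" using nk by simp
          have "zs n = T (n - k)" "zs (Suc n) = T (Suc (n - k))" unfolding zs_def using nk sk by auto
          then show ?thesis using T(1) unfolding trajectory_def by simp
        qed
      qed
    qed
    have "zs 0 = z" unfolding zs_def using k by simp
    moreover have "zs k = wi" unfolding zs_def using e0 p0 wi_def by simp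
    ultimately show "z \<in> preimages \<rho> d wi"
      unfolding preimages_def preimage_def using tr k(1) by blast
  qed
  have "finite ((\<lambda>(j,y). pt y j) ` G)" using finite_subset[OF sub] fin unfolding wi_def by blast
  moreover have "inj_on (\<lambda>(j,y). pt y j) G"
  proof (rule inj_onI)
    fix a b assume "a \<in> G" "b \<in> G" and eq: "(\<lambda>(j,y). pt y j) a = (\<lambda>(j,y). pt y j) b"
    then obtain k l where "a = (e k, p k)" "b = (e l, p l)" unfolding G_def by auto
    then show "a = b" using eq pt_inj[of "p k" "e k" "p l" "e l"] pint[of k] by auto
  qed
  ultimately have "finite G" using finite_imageD by blast
  moreover have "range (\<lambda>k. (e k, p k)) = insert (e 0, p 0) G"
  proof -
    have "UNIV = insert (0::nat) {1..}" by auto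
    then show ?thesis unfolding G_def by (metis image_insert)
  qed
  ultimately show ?thesis by simp
qed

end


context sys begin

lemma main_sys:
  assumes inf1: "infinite (preimages \<rho> d (pt (d$1) 1))"
    and fin2: "finite (preimages \<rho> d (pt (d$2) 2))"
    and fin3: "finite (preimages \<rho> d (pt (d$3) 3))"
  shows "\<forall>u \<in> P1 \<rho> d. u islimpt P1 \<rho> d"
proof -
  define w1 where "w1 = pt (d$1) 1"
  have nonempty: "Rset w1 t \<noteq> {}" for t
  proof
    assume e: "Rset w1 t = {}"
    have emp: "Rset w1 (t + m) = {}" for m
    proof (induction m)
      case 0 then show ?case using e by simp
    next
      case (Suc m)
      show ?case
      proof (rule ccontr)
        assume "Rset w1 (t + Suc m) \<noteq> {}"
        then obtain z where "z \<in> Rset w1 (Suc (t + m))" by auto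
        then show False using R_down Suc by blast
      qed
    qed
    have "preimages \<rho> d w1 \<subseteq> (\<Union>s\<in>{..<t}. Rset w1 s)"
    proof
      fix z assume "z \<in> preimages \<rho> d w1"
      then obtain s where s: "z \<in> Rset w1 s" unfolding preimages_eq by blast
      have "s < t"
      proof (rule ccontr)
        assume "\<not> s < t"
        then have "s = t + (s - t)" by simp
        then show False using emp[of "s - t"] s by simp
      qed
      then show "z \<in> (\<Union>s\<in>{..<t}. Rset w1 s)" using s by blast
    qed
    moreover have "finite (\<Union>s\<in>{..<t}. Rset w1 s)" using R_fin by simp
    ultimately show False using inf1 finite_subset unfolding w1_def by blast
  qed
  define u where "u t = (SOME z. z \<in> Rset w1 t)" for t
  have uR: "u t \<in> Rset w1 t" for t unfolding u_def using nonempty[of t] by (simp add: some_in_eq)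
  have uph: "u t \<in> ph (u (Suc t))" for t
  proof -
    obtain z' where "z' \<in> Rset w1 t" "z' \<in> ph (u (Suc t))" using R_down[OF uR[of "Suc t"]] by blast
    then show ?thesis using R_unique uR by metis
  qed
  have u0: "u 0 = w1" using uR[of 0] unfolding Rset_def by auto
  have pre_u: "z \<in> preimages \<rho> d w1 \<Longrightarrow> \<exists>t\<ge>1. z = u t" for z
    unfolding preimages_eq using R_unique uR by blast
  have inju: "inj u"
  proof (rule ccontr)
    assume "\<not> inj u"
    then obtain a b where ab0: "a \<noteq> b" "u a = u b" unfolding inj_def by blast
    define a' where "a' = min a b"
    define b' where "b' = max a b"
    have ab: "a' < b'" "u a' = u b'" using ab0 unfolding a'_def b'_def by (auto simp: min_def max_def)
    have per: "u (a' + m) = u (b' + m)" for m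
    proof (induction m)
      case 0 then show ?case using ab by simp
    next
      case (Suc m)
      have "u (a' + m) \<in> ph (u (Suc (a' + m)))" "u (a' + m) \<in> ph (u (Suc (b' + m)))"
        using uph[of "a'+m"] uph[of "b'+m"] Suc by auto
      then show ?case using BU by simp
    qed
    have inr: "u n \<in> u ` {..<b'}" for n
    proof (induction n rule: less_induct)
      case (less n)
      show ?case
      proof (cases "n < b'")
        case True then show ?thesis by simp
      next
        case False
        then have "n = b' + (n - b')" by simp
        then have "u n = u (a' + (n - b'))" using per[of "n - b'"] by simp
        moreover have "a' + (n - b') < n" using False ab(1) by simp
        ultimately show ?thesis using less by simp
      qed
    qed
    have "preimages \<rho> d w1 \<subseteq> u ` {..<b'}" using pre_u inr by blast
    then show False using inf1 finite_subset unfolding w1_def by blast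
  qed
  have rep: "\<exists>p. 0 < snd p \<and> snd p < 1 \<and> u t = pt (snd p) (fst p)" for t
  proof -
    obtain i x j y where "u t = pt y j" "st i x j y" using phi_inv[OF uph[of t]] by blast
    then show ?thesis using stp_int by (intro exI[of _ "(j,y)"]) auto
  qed
  define E where "E t = fst (SOME p. 0 < snd p \<and> snd p < 1 \<and> u t = pt (snd p) (fst p))" for t
  define X where "X t = snd (SOME p. 0 < snd p \<and> snd p < 1 \<and> u t = pt (snd p) (fst p))" for t
  have EX: "0 < X t \<and> X t < 1 \<and> u t = pt (X t) (E t)" for t
    unfolding E_def X_def using someI_ex[OF rep[of t]] by blast
  have ch: "st (E (Suc t)) (X (Suc t)) (E t) (X t)" for t
  proof -
    obtain i x j y where h: "u (Suc t) = pt x i" "u t = pt y j" "st i x j y" using phi_inv[OF uph[of t]] by blast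
    have "i = E (Suc t) \<and> x = X (Suc t)" using pt_inj[of "X (Suc t)" "E (Suc t)" x i] EX[of "Suc t"] h(1) by simp
    moreover have "j = E t \<and> y = X t" using pt_inj[of "X t" "E t" y j] EX[of t] h(2) by simp
    ultimately show ?thesis using h(3) by simp
  qed
  have E0: "E 0 = 1" and X0: "X 0 = d$1"
    using pt_inj[of "X 0" "E 0" "d$1" 1] EX[of 0] u0 unfolding w1_def by auto
  have injEX: "inj (\<lambda>t. (E t, X t))"
  proof (rule injI)
    fix s t assume "(E s, X s) = (E t, X t)"
    then have "u s = u t" using EX[of s] EX[of t] by simp
    then show "s = t" using inju unfolding inj_def by blast
  qed
  have FB: "finite (range (\<lambda>k. (e k, p k)))"
    if "i \<noteq> 1" "e 0 = i" "p 0 = d$i" "\<forall>k. st (e (Suc k)) (p (Suc k)) (e k) (p k)" for i e p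
  proof -
    have "i = 2 \<or> i = 3" using exhaust_3[of i] that(1) by auto
    then have "finite (preimages \<rho> d (pt (d$i) i))" using fin2 fin3 by auto
    then show ?thesis using FB_R3 that(2-4) by blast
  qed
  have "chn \<rho> d E X"
    unfolding chn_def chn_axioms_def using sys_axioms E0 X0 ch injEX FB by blast
  then interpret c: chn \<rho> d E X .
  have P1eq: "P1 \<rho> d = range u"
  proof
    show "P1 \<rho> d \<subseteq> range u"
    proof
      fix z assume "z \<in> P1 \<rho> d"
      then have "z = w1 \<or> z \<in> preimages \<rho> d w1" unfolding P1_def w1_def by simp
      then show "z \<in> range u"
      proof
        assume "z = w1" then show ?thesis using u0 by (metis rangeI)
      next
        assume "z \<in> preimages \<rho> d w1" then show ?thesis using pre_u by blast
      qed
    qed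
    show "range u \<subseteq> P1 \<rho> d"
    proof
      fix z assume "z \<in> range u"
      then obtain t where t: "z = u t" by blast
      show "z \<in> P1 \<rho> d"
      proof (cases "t = 0")
        case True then show ?thesis using t u0 unfolding P1_def w1_def by simp
      next
        case False
        then have "t \<ge> 1" by simp
        then have "z \<in> preimages \<rho> d w1" unfolding preimages_eq using t uR[of t] by blast
        then show ?thesis unfolding P1_def w1_def by simp
      qed
    qed
  qed
  show ?thesis
  proof
    fix v assume "v \<in> P1 \<rho> d"
    then obtain t where t: "v = u t" using P1eq by auto
    show "v islimpt P1 \<rho> d"
      unfolding islimpt_approachable
    proof (intro allI impI)
      fix \<epsilon> :: real assume e: "\<epsilon> > 0"
      obtain s where s: "s \<noteq> t" "E s = E t" "\<bar>X s - X t\<bar> < \<epsilon>/2"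
        using c.acc_every[of t] e unfolding c.acc_def by (meson half_gt_zero)
      have "u s \<in> P1 \<rho> d" using P1eq by auto
      moreover have "u s \<noteq> v" using t s(1) inju unfolding inj_def by blast
      moreover have "dist (u s) v < \<epsilon>"
      proof -
        have "dist (u s) v = dist (pt (X s) (E t)) (pt (X t) (E t))" using EX[of s] EX[of t] t s(2) by simp
        also have "\<dots> \<le> 2 * \<bar>X s - X t\<bar>" by (rule pt_dist)
        also have "\<dots> < \<epsilon>" using s(3) by simp
        finally show ?thesis .
      qed
      ultimately show "\<exists>x'\<in>P1 \<rho> d. x' \<noteq> v \<and> dist x' v < \<epsilon>" by blast
    qed
  qed
qed

end

theorem lemma5p2:
  fixes \<rho> d :: "real^3"
  assumes rho_pos: "\<And>i. 0 < \<rho>$i" and rho_lt1: "\<And>i. \<rho>$i < 1"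
    and rho_sum: "\<rho>$1 + \<rho>$2 + \<rho>$3 > 1"
    and rho_pair: "\<And>i j. i \<noteq> j \<Longrightarrow> \<rho>$i + \<rho>$j \<le> 1"
    and d_pos: "\<And>i. 0 < d$i" and d_lt1: "\<And>i. d$i < 1"
    and inf1: "infinite (preimages \<rho> d (pt (d$1) 1))"
    and fin2: "finite (preimages \<rho> d (pt (d$2) 2))"
    and fin3: "finite (preimages \<rho> d (pt (d$3) 3))"
  shows "\<forall>u \<in> P1 \<rho> d. u islimpt P1 \<rho> d"
proof -
  interpret sys \<rho> d by unfold_locales (fact rho_pos rho_lt1 rho_sum rho_pair d_pos d_lt1)+
  show ?thesis using main_sys[OF inf1 fin2 fin3] .
qed


end
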